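(* Let $a\in(-\infty,1)$ and $\omega\in\mathbb D_a$. Then $T(\omega)(0)=0$, $T(\omega)'(x)\ge0$ for all $x\ge0$, and $s\mapsto T(\omega)(\sqrt s)$ is concave on $[0,\infty)$.
   Context: Let $\rho(x)=(1+|x|)^{-1/2}$ and $\eta_a=\frac{1}{2^{9/2}(4+|a|)^3}$. $\mathbb D_a$ is the set of continuous even functions $\omega$ on $\mathbb R$ with $\|\rho\omega\|_{L^\infty}<\infty$ such that $\omega(0)=1$; $(1-x^2)_+\le\omega(x)\le1$ for all $x$; $\omega$ is non-increasing on $[0,\infty)$; $s\mapsto\omega(\sqrt s)$ is convex on $[0,\infty)$; and the left derivative satisfies $\omega'_-(1/2)\le-\eta_a$. $T(\omega)(x)=\frac1\pi\int_0^\infty\ln\left|\frac{x^2-y^2}{y^2}\right|\omega(y)\,dy$. *)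

theory Defs
  imports "HOL-Analysis.Analysis"
begin

definition rho :: "real \<Rightarrow> real" where
  "rho x = (1 + \<bar>x\<bar>) powr (-1/2)"

definition eta :: "real \<Rightarrow> real" where
  "eta a = 1 / (2 powr (9/2) * (4 + \<bar>a\<bar>) ^ 3)"

text \<open>The left derivative at 1/2 is the derivative within the
  left half-line; the weighted sup-norm condition is boundedness of rho times omega
  (omega is continuous, so the essential sup equals the sup).\<close>
definition DD :: "real \<Rightarrow> (real \<Rightarrow> real) set" where
  "DD a = {\<omega>. continuous_on UNIV \<omega>
      \<and> (\<forall>x. \<omega> (-x) = \<omega> x)
      \<and> bounded (range (\<lambda>x. rho x * \<omega> x))
      \<and> \<omega> 0 = 1
      \<and> (\<forall>x. max 0 (1 - x\<^sup>2) \<le> \<omega> x \<and> \<omega> x \<le> 1)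
      \<and> (\<forall>x y. 0 \<le> x \<and> x \<le> y \<longrightarrow> \<omega> y \<le> \<omega> x)
      \<and> convex_on {0..} (\<lambda>s. \<omega> (sqrt s))
      \<and> (\<exists>L. (\<omega> has_real_derivative L) (at (1/2) within {..1/2}) \<and> L \<le> - eta a)}"

definition T :: "(real \<Rightarrow> real) \<Rightarrow> real \<Rightarrow> real" where
  "T \<omega> x = (1 / pi) * (LBINT y:{0<..}. ln \<bar>(x\<^sup>2 - y\<^sup>2) / y\<^sup>2\<bar> * \<omega> y)"

end

theory Submission
  imports Defs "HOL-Real_Asymp.Real_Asymp"
begin


lemma DERIV_ln_abs:
  fixes u :: real assumes "u \<noteq> 0"
  shows "((\<lambda>u. ln \<bar>u\<bar>) has_real_derivative 1 / u) (at u)"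
proof (cases "u > 0")
  case True
  have ev: "eventually (\<lambda>v. ln \<bar>v\<bar> = ln v) (nhds u)"
    using eventually_nhds_in_open[of "{0<..}" u] True
    by (auto elim!: eventually_mono)
  have "((\<lambda>v. ln v) has_real_derivative 1 / u) (at u)"
    using True by (auto intro!: derivative_eq_intros)
  then show ?thesis
    by (rule has_field_derivative_transform_within_open[where S="{0<..}"]) (use True in auto)
next
  case False
  then have u: "u < 0" using assms by auto
  have "((\<lambda>v. ln (- v)) has_real_derivative 1 / u) (at u)"
    using u by (auto intro!: derivative_eq_intros simp: field_simps)
  then show ?thesis
    by (rule has_field_derivative_transform_within_open[where S="{..<0}"]) (use u in auto)
qed

lemma DERIV_xlnabs:
  fixes u :: real assumes "u \<noteq> 0"
  shows "((\<lambda>u. u * ln \<bar>u\<bar>) has_real_derivative ln \<bar>u\<bar> + 1) (at u)"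
  using DERIV_mult[OF DERIV_ident DERIV_ln_abs[OF assms]] assms by simp

lemma xlnabs_tendsto0: "((\<lambda>u::real. u * ln \<bar>u\<bar>) \<longlongrightarrow> 0) (at 0)"
proof -
  have r: "((\<lambda>u::real. u * ln \<bar>u\<bar>) \<longlongrightarrow> 0) (at_right 0)"
  proof -
    have "((\<lambda>u::real. u * ln u) \<longlongrightarrow> 0) (at_right 0)" by real_asymp
    then show ?thesis
      by (rule Lim_transform_eventually) (auto intro!: eventually_mono[OF eventually_at_right_real[of 0 1]])
  qed
  have l: "((\<lambda>u::real. u * ln \<bar>u\<bar>) \<longlongrightarrow> 0) (at_left 0)"
  proof -
    have "((\<lambda>u::real. u * ln (-u)) \<longlongrightarrow> 0) (at_left 0)" by real_asymp
    then show ?thesis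
      by (rule Lim_transform_eventually) (rule eventually_mono[OF eventually_at_left_real[of "-1" 0]], auto)
  qed
  show ?thesis using r l by (simp add: filterlim_split_at)
qed

lemma isCont_xlnabs: "isCont (\<lambda>u::real. u * ln \<bar>u\<bar>) z"
proof (cases "z = 0")
  case True
  then show ?thesis using xlnabs_tendsto0 by (simp add: isCont_def)
next
  case False
  then show ?thesis using DERIV_xlnabs DERIV_isCont by blast
qed

lemma continuous_on_xlnabs[continuous_intros]:
  "continuous_on S f \<Longrightarrow> continuous_on S (\<lambda>x. f x * ln \<bar>f x :: real\<bar>)"
  by (rule continuous_on_compose2[of UNIV "\<lambda>u::real. u * ln \<bar>u\<bar>" S f])
     (auto intro!: continuous_at_imp_continuous_on isCont_xlnabs)


definition Kf :: "real \<Rightarrow> real \<Rightarrow> real" where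
  "Kf x y = ln \<bar>(x\<^sup>2 - y\<^sup>2) / y\<^sup>2\<bar>"
definition KL :: "real \<Rightarrow> real \<Rightarrow> real" where
  "KL a y = ln \<bar>y - a\<bar> + ln \<bar>y + a\<bar> - 2 * ln \<bar>y\<bar>"
definition HH :: "real \<Rightarrow> real \<Rightarrow> real" where
  "HH a y = (y - a) * ln \<bar>y - a\<bar> + (y + a) * ln \<bar>y + a\<bar> - 2 * (y * ln \<bar>y\<bar>)"

lemma ln_abs_eq: "ln \<bar>x\<bar> = ln (x::real)"
  by (cases "x \<ge> 0") (auto simp: ln_minus)

lemma Kf_KL: assumes "y \<noteq> 0" "y \<noteq> a" "y \<noteq> -a" shows "Kf a y = KL a y"
proof -
  have e: "\<bar>(a\<^sup>2 - y\<^sup>2) / y\<^sup>2\<bar> = (\<bar>y - a\<bar> * \<bar>y + a\<bar>) / \<bar>y\<bar> ^ 2"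
    by (simp add: abs_mult power2_eq_square algebra_simps abs_minus_commute flip: abs_mult)
  have p: "\<bar>y - a\<bar> > 0" "\<bar>y + a\<bar> > 0" "\<bar>y\<bar> > 0" using assms by auto
  have "ln ((\<bar>y - a\<bar> * \<bar>y + a\<bar>) / \<bar>y\<bar> ^ 2) = ln (\<bar>y - a\<bar> * \<bar>y + a\<bar>) - ln (\<bar>y\<bar> ^ 2)"
    using p by (intro ln_divide_pos) auto
  also have "\<dots> = ln \<bar>y - a\<bar> + ln \<bar>y + a\<bar> - 2 * ln \<bar>y\<bar>"
    using p by (simp add: ln_mult ln_realpow ln_abs_eq del: power_abs)
  finally show ?thesis unfolding Kf_def KL_def e .
qed

lemma Kf_abs: "Kf \<bar>x\<bar> = Kf x"
  by (simp add: Kf_def fun_eq_iff)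

lemma Kf_zero: "y \<noteq> 0 \<Longrightarrow> Kf 0 y = 0"
  by (simp add: Kf_def)

lemma HH_cont: "continuous_on UNIV (HH a)"
  unfolding HH_def by (intro continuous_intros)

lemma HH_isCont: "isCont (HH a) y"
  using HH_cont continuous_on_eq_continuous_at by blast

lemma HH_deriv: assumes "y \<noteq> 0" "y \<noteq> a" "y \<noteq> -a"
  shows "(HH a has_real_derivative KL a y) (at y)"
proof -
  have g1: "((\<lambda>y. y - a) has_real_derivative 1) (at y)" by (auto intro!: derivative_eq_intros)
  have g2: "((\<lambda>y. y + a) has_real_derivative 1) (at y)" by (auto intro!: derivative_eq_intros)
  have d1: "((\<lambda>y. (y - a) * ln \<bar>y - a\<bar>) has_real_derivative ln \<bar>y - a\<bar> + 1) (at y)"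
    using DERIV_chain2[OF DERIV_xlnabs[of "y - a"] g1] assms by simp
  have d2: "((\<lambda>y. (y + a) * ln \<bar>y + a\<bar>) has_real_derivative ln \<bar>y + a\<bar> + 1) (at y)"
    using DERIV_chain2[OF DERIV_xlnabs[of "y + a"] g2] assms by simp
  have d3: "((\<lambda>y. y * ln \<bar>y\<bar>) has_real_derivative ln \<bar>y\<bar> + 1) (at y)"
    using DERIV_xlnabs assms by auto
  have "(HH a has_real_derivative (ln \<bar>y - a\<bar> + 1) + (ln \<bar>y + a\<bar> + 1) - 2 * (ln \<bar>y\<bar> + 1)) (at y)"
    unfolding HH_def by (intro DERIV_diff DERIV_add d1 d2 DERIV_cmult d3)
  then show ?thesis by (simp add: KL_def algebra_simps)
qed

lemma isCont_ln_abs: "u \<noteq> 0 \<Longrightarrow> isCont (\<lambda>u. ln \<bar>u\<bar>) (u::real)"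
  using DERIV_ln_abs DERIV_isCont by blast

lemma KL_isCont: assumes "y \<noteq> 0" "y \<noteq> a" "y \<noteq> -a" shows "isCont (KL a) y"
proof -
  have 1: "isCont (\<lambda>y. ln \<bar>y - a\<bar>) y"
    by (rule isCont_o2[where g="\<lambda>u. ln \<bar>u\<bar>"]) (use assms in \<open>auto intro!: isCont_ln_abs\<close>)
  have 2: "isCont (\<lambda>y. ln \<bar>y + a\<bar>) y"
    by (rule isCont_o2[where g="\<lambda>u. ln \<bar>u\<bar>"]) (use assms in \<open>auto intro!: isCont_ln_abs\<close>)
  have 3: "isCont (\<lambda>y. ln \<bar>y\<bar>) y" using assms isCont_ln_abs by auto
  show ?thesis unfolding KL_def by (intro continuous_intros 1 2 3)
qed

lemma HH_deriv_neg: assumes "y \<noteq> 0" "y \<noteq> a" "y \<noteq> -a"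
  shows "((\<lambda>y. - HH a y) has_real_derivative - KL a y) (at y)"
  using DERIV_minus[OF HH_deriv[OF assms]] .

lemma HH_at_0: "HH a 0 = 0"
  by (simp add: HH_def)

lemma HH_at_top: "(HH a \<longlongrightarrow> 0) at_top"
proof -
  have "((\<lambda>y::real. (y-a)*ln(y-a) + (y+a)*ln(y+a) - 2*(y*ln y)) \<longlongrightarrow> 0) at_top" by real_asymp
  moreover have "eventually (\<lambda>y. (y-a)*ln(y-a) + (y+a)*ln(y+a) - 2*(y*ln y) = HH a y) at_top"
    using eventually_ge_at_top[of "\<bar>a\<bar> + 1"] by eventually_elim (auto simp: HH_def)
  ultimately show ?thesis by (rule Lim_transform_eventually)
qed

lemma FTC_piece:
  fixes f F :: "real \<Rightarrow> real" and a b :: ereal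
  assumes "a < b"
  assumes F: "\<And>x. a < ereal x \<Longrightarrow> ereal x < b \<Longrightarrow> DERIV F x :> f x"
  assumes f: "\<And>x. a < ereal x \<Longrightarrow> ereal x < b \<Longrightarrow> isCont f x"
  assumes f_nonneg: "\<And>x. a < ereal x \<Longrightarrow> ereal x < b \<Longrightarrow> 0 \<le> f x"
  assumes A: "((F \<circ> real_of_ereal) \<longlongrightarrow> A) (at_right a)"
  assumes B: "((F \<circ> real_of_ereal) \<longlongrightarrow> B) (at_left b)"
  shows "set_integrable lborel (einterval a b) f \<and> (LBINT x:einterval a b. f x) = B - A"
proof -
  have "AE x in lborel. a < ereal x \<longrightarrow> ereal x < b \<longrightarrow> 0 \<le> f x"
    using f_nonneg by auto
  from interval_integral_FTC_nonneg[OF assms(1) F f this A B] less_imp_le[OF assms(1)] show ?thesis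
    by (simp add: interval_lebesgue_integral_def)
qed

lemma tendsto_right_isCont: "isCont f x \<Longrightarrow> (f \<longlongrightarrow> f x) (at_right x)"
  for f :: "real \<Rightarrow> real" by (simp add: isCont_def filterlim_at_split)
lemma tendsto_left_isCont: "isCont f x \<Longrightarrow> (f \<longlongrightarrow> f x) (at_left x)"
  for f :: "real \<Rightarrow> real" by (simp add: isCont_def filterlim_at_split)

lemma Kf_integral_pos:
  fixes a :: real assumes a: "a > 0"
  shows "set_integrable lborel {0<..} (Kf a) \<and> (LBINT y:{0<..}. Kf a y) = 0"
proof -
  define c where "c = a / sqrt 2"
  have c: "0 < c" "c < a" using a by (auto simp: c_def field_simps)
  have c2: "c\<^sup>2 = a\<^sup>2 / 2" by (simp add: c_def power_divide)
  have p1: "set_integrable lborel {0<..<c} (KL a) \<and> (LBINT y:{0<..<c}. KL a y) = HH a c - 0"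
  proof -
    have "set_integrable lborel (einterval (ereal 0) (ereal c)) (KL a) \<and>
       (LBINT y:einterval (ereal 0) (ereal c). KL a y) = HH a c - 0"
    proof (rule FTC_piece)
      show "KL a x \<ge> 0" if "ereal 0 < ereal x" "ereal x < ereal c" for x
      proof -
        have x: "0 < x" "x < c" using that by auto
        then have "x\<^sup>2 < c\<^sup>2" by (simp add: power_strict_mono)
        then have 1: "1 \<le> (a\<^sup>2 - x\<^sup>2) / x\<^sup>2" using x by (simp add: c2 field_simps)
        have "x\<^sup>2 < a\<^sup>2" using \<open>x\<^sup>2 < c\<^sup>2\<close> c2 zero_le_power2[of c] by linarith
        then have "\<bar>(a\<^sup>2 - x\<^sup>2) / x\<^sup>2\<bar> = (a\<^sup>2 - x\<^sup>2) / x\<^sup>2" by simp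
        then have "0 \<le> Kf a x" unfolding Kf_def using 1 by (simp only: ln_ge_zero)
        then show ?thesis using Kf_KL[of x a] x c by auto
      qed
      show "((HH a \<circ> real_of_ereal) \<longlongrightarrow> 0) (at_right (ereal 0))"
        unfolding ereal_tendsto_simps using tendsto_right_isCont[OF HH_isCont, of a 0] by (simp add: HH_at_0)
      show "((HH a \<circ> real_of_ereal) \<longlongrightarrow> HH a c) (at_left (ereal c))"
        unfolding ereal_tendsto_simps using tendsto_left_isCont[OF HH_isCont] by simp
    qed (use c in \<open>auto intro!: HH_deriv KL_isCont\<close>)
    then show ?thesis by simp
  qed
  have p2: "set_integrable lborel {c<..<a} (\<lambda>y. - KL a y) \<and> (LBINT y:{c<..<a}. - KL a y) = - HH a a - (- HH a c)"
  proof -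
    have "set_integrable lborel (einterval (ereal c) (ereal a)) (\<lambda>y. - KL a y) \<and>
       (LBINT y:einterval (ereal c) (ereal a). - KL a y) = - HH a a - (- HH a c)"
    proof (rule FTC_piece)
      show "- KL a x \<ge> 0" if "ereal c < ereal x" "ereal x < ereal a" for x
      proof -
        have x: "c < x" "x < a" using that by auto
        then have "c\<^sup>2 < x\<^sup>2" "x\<^sup>2 < a\<^sup>2" using c by (simp_all add: power_strict_mono)
        then have "\<bar>(a\<^sup>2 - x\<^sup>2) / x\<^sup>2\<bar> \<le> 1" using x c by (simp add: c2 field_simps)
        moreover have "\<bar>(a\<^sup>2 - x\<^sup>2) / x\<^sup>2\<bar> > 0" using \<open>x\<^sup>2 < a\<^sup>2\<close> x c by auto
        ultimately have "Kf a x \<le> 0" by (simp add: Kf_def)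
        then show ?thesis using Kf_KL[of x a] x c by auto
      qed
      show "(((\<lambda>y. - HH a y) \<circ> real_of_ereal) \<longlongrightarrow> - HH a c) (at_right (ereal c))"
        unfolding ereal_tendsto_simps using tendsto_right_isCont[OF HH_isCont] by (auto intro: tendsto_minus)
      show "(((\<lambda>y. - HH a y) \<circ> real_of_ereal) \<longlongrightarrow> - HH a a) (at_left (ereal a))"
        unfolding ereal_tendsto_simps using tendsto_left_isCont[OF HH_isCont] by (auto intro: tendsto_minus)
    qed (use c in \<open>auto intro!: HH_deriv_neg KL_isCont continuous_intros\<close>)
    then show ?thesis by simp
  qed
  have p3: "set_integrable lborel {a<..} (\<lambda>y. - KL a y) \<and> (LBINT y:{a<..}. - KL a y) = 0 - (- HH a a)"
  proof -
    have "set_integrable lborel (einterval (ereal a) \<infinity>) (\<lambda>y. - KL a y) \<and>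
       (LBINT y:einterval (ereal a) \<infinity>. - KL a y) = 0 - (- HH a a)"
    proof (rule FTC_piece)
      show "- KL a x \<ge> 0" if "ereal a < ereal x" "ereal x < \<infinity>" for x
      proof -
        have x: "a < x" using that by auto
        then have "a\<^sup>2 < x\<^sup>2" using a by (simp_all add: power_strict_mono)
        then have "\<bar>(a\<^sup>2 - x\<^sup>2) / x\<^sup>2\<bar> \<le> 1" using x a by (simp add: field_simps)
        moreover have "\<bar>(a\<^sup>2 - x\<^sup>2) / x\<^sup>2\<bar> > 0" using \<open>a\<^sup>2 < x\<^sup>2\<close> x a by auto
        ultimately have "Kf a x \<le> 0" by (simp add: Kf_def)
        then show ?thesis using Kf_KL[of x a] x a by auto
      qed
      show "(((\<lambda>y. - HH a y) \<circ> real_of_ereal) \<longlongrightarrow> - HH a a) (at_right (ereal a))"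
        unfolding ereal_tendsto_simps using tendsto_right_isCont[OF HH_isCont] by (auto intro: tendsto_minus)
      show "(((\<lambda>y. - HH a y) \<circ> real_of_ereal) \<longlongrightarrow> 0) (at_left \<infinity>)"
        unfolding ereal_tendsto_simps using tendsto_minus[OF HH_at_top] by simp
    qed (use a in \<open>auto intro!: HH_deriv_neg KL_isCont continuous_intros\<close>)
    then show ?thesis by simp
  qed
  define G where "G y = indicator {0<..<c} y * KL a y + indicator {c<..<a} y * KL a y + indicator {a<..} y * KL a y" for y
  have i1: "integrable lborel (\<lambda>y. indicator {0<..<c} y * KL a y)"
    using p1 by (simp add: set_integrable_def)
  have i2: "integrable lborel (\<lambda>y. indicator {c<..<a} y * KL a y)"
    using p2 by (simp add: set_integrable_def)
  have i3: "integrable lborel (\<lambda>y. indicator {a<..} y * KL a y)"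
    using p3 by (simp add: set_integrable_def)
  have iG: "integrable lborel G" unfolding G_def using i1 i2 i3 by auto
  have eqG: "indicator {0<..} y * Kf a y = G y" if "y \<notin> {c, a}" for y
    using that c a Kf_KL[of y a] by (auto simp: G_def indicator_def)
  have "integrable lborel (\<lambda>y. indicator {0<..} y * Kf a y)"
    by (rule integrable_discrete_difference[where X="{c,a}", THEN iffD2, OF _ _ _ _ iG]) (use eqG in auto)
  moreover have "(LBINT y. indicator {0<..} y * Kf a y) = (LBINT y. G y)"
    by (rule integral_discrete_difference[where X="{c,a}"]) (use eqG in auto)
  moreover have "(LBINT y. G y) = 0"
  proof -
    have "(LBINT y. G y) = (LBINT y:{0<..<c}. KL a y) + (LBINT y:{c<..<a}. KL a y) + (LBINT y:{a<..}. KL a y)"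
      unfolding G_def using i1 i2 i3 by (simp add: set_lebesgue_integral_def)
    also have "\<dots> = HH a c + (HH a a - HH a c) + (- HH a a)"
    proof -
      have m: "(LBINT y:S. - KL a y) = - (LBINT y:S. KL a y)" for S
        by (simp add: set_lebesgue_integral_def)
      show ?thesis using p1 p2 p3 m[of "{c<..<a}"] m[of "{a<..}"] by simp
    qed
    finally show ?thesis by simp
  qed
  ultimately show ?thesis by (simp add: set_integrable_def set_lebesgue_integral_def)
qed

lemma Kf_integral:
  fixes x :: real
  shows "set_integrable lborel {0<..} (Kf x) \<and> (LBINT y:{0<..}. Kf x y) = 0"
proof (cases "x = 0")
  case True
  have "Kf x = (\<lambda>y. 0)" by (auto simp: True Kf_def)
  then show ?thesis by (simp add: set_integrable_def)
next
  case False
  then show ?thesis using Kf_integral_pos[of "\<bar>x\<bar>"] by (simp add: Kf_abs)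
qed


definition xl :: "real \<Rightarrow> real" where "xl u = u * ln \<bar>u\<bar>"

lemma xl_deriv[derivative_intros]:
  assumes "(f has_real_derivative f') (at y)" "f y \<noteq> 0"
  shows "((\<lambda>y. xl (f y)) has_real_derivative (ln \<bar>f y\<bar> + 1) * f') (at y)"
  using DERIV_chain2[OF DERIV_xlnabs[OF assms(2)] assms(1)] by (simp add: xl_def)

lemma xl_cont[continuous_intros]: "continuous_on S f \<Longrightarrow> continuous_on S (\<lambda>x. xl (f x))"
  unfolding xl_def by (rule continuous_on_xlnabs)

definition AA :: "real \<Rightarrow> real \<Rightarrow> real \<Rightarrow> real" where
  "AA x s y = (s\<^sup>2 - (y\<^sup>2 - x * y + x\<^sup>2) / 3) * xl (y + x)
     + (s\<^sup>2 - (y\<^sup>2 + x * y + x\<^sup>2) / 3) * xl (y - x)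
     - 2 * (s\<^sup>2 - y\<^sup>2 / 3) * xl y + 2 / 3 * x\<^sup>2 * y"

lemma AA_deriv: assumes "y \<noteq> 0" "y \<noteq> x" "y \<noteq> -x"
  shows "(AA x s has_real_derivative KL x y * (s\<^sup>2 - y\<^sup>2)) (at y)"
proof -
  have ne: "y + x \<noteq> 0" "y - x \<noteq> 0" using assms by auto
  have d1: "((\<lambda>y. xl (y + x)) has_real_derivative (ln \<bar>y + x\<bar> + 1)) (at y)"
    using xl_deriv[of "\<lambda>y. y + x" 1 y] ne by (auto intro!: derivative_eq_intros)
  have d2: "((\<lambda>y. xl (y - x)) has_real_derivative (ln \<bar>y - x\<bar> + 1)) (at y)"
    using xl_deriv[of "\<lambda>y. y - x" 1 y] ne by (auto intro!: derivative_eq_intros)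
  have d3: "(xl has_real_derivative (ln \<bar>y\<bar> + 1)) (at y)"
    using xl_deriv[of "\<lambda>y. y" 1 y] assms by (auto intro!: derivative_eq_intros)
  have p1: "((\<lambda>y. s\<^sup>2 - (y\<^sup>2 - x * y + x\<^sup>2) / 3) has_real_derivative (- (2 * y - x) / 3)) (at y)"
    by (auto intro!: derivative_eq_intros simp: field_simps)
  have p2: "((\<lambda>y. s\<^sup>2 - (y\<^sup>2 + x * y + x\<^sup>2) / 3) has_real_derivative (- (2 * y + x) / 3)) (at y)"
    by (auto intro!: derivative_eq_intros simp: field_simps)
  have p3: "((\<lambda>y. 2 * (s\<^sup>2 - y\<^sup>2 / 3)) has_real_derivative (- 4 * y / 3)) (at y)"
    by (auto intro!: derivative_eq_intros simp: field_simps)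
  have p4: "((\<lambda>y. 2 / 3 * x\<^sup>2 * y) has_real_derivative (2 / 3 * x\<^sup>2)) (at y)"
    by (auto intro!: derivative_eq_intros)
  have "(AA x s has_real_derivative
      ((- (2 * y - x) / 3) * xl (y + x) + (ln \<bar>y + x\<bar> + 1) * (s\<^sup>2 - (y\<^sup>2 - x * y + x\<^sup>2) / 3))
    + ((- (2 * y + x) / 3) * xl (y - x) + (ln \<bar>y - x\<bar> + 1) * (s\<^sup>2 - (y\<^sup>2 + x * y + x\<^sup>2) / 3))
    - ((- 4 * y / 3) * xl y + (ln \<bar>y\<bar> + 1) * (2 * (s\<^sup>2 - y\<^sup>2 / 3)))
    + 2 / 3 * x\<^sup>2) (at y)"
    unfolding AA_def
    by (intro DERIV_add DERIV_diff DERIV_mult p1 p2 p3 p4 d1 d2 d3)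
  moreover have "((- (2 * y - x) / 3) * xl (y + x) + (ln \<bar>y + x\<bar> + 1) * (s\<^sup>2 - (y\<^sup>2 - x * y + x\<^sup>2) / 3))
    + ((- (2 * y + x) / 3) * xl (y - x) + (ln \<bar>y - x\<bar> + 1) * (s\<^sup>2 - (y\<^sup>2 + x * y + x\<^sup>2) / 3))
    - ((- 4 * y / 3) * xl y + (ln \<bar>y\<bar> + 1) * (2 * (s\<^sup>2 - y\<^sup>2 / 3)))
    + 2 / 3 * x\<^sup>2 = KL x y * (s\<^sup>2 - y\<^sup>2)"
  proof -
    define A where "A = ln \<bar>y + x\<bar>"
    define B where "B = ln \<bar>y - x\<bar>"
    define C where "C = ln \<bar>y\<bar>"
    have e1: "KL x y = B + A - 2 * C" by (simp add: KL_def A_def B_def C_def)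
    have e2: "xl (y + x) = (y + x) * A" "xl (y - x) = (y - x) * B" "xl y = y * C"
      by (simp_all add: xl_def A_def B_def C_def)
    show ?thesis
      unfolding A_def[symmetric] B_def[symmetric] C_def[symmetric] e1 e2
      by (simp add: field_simps power2_eq_square)
  qed
  ultimately show ?thesis by simp
qed

definition PP :: "real \<Rightarrow> real \<Rightarrow> real" where
  "PP x s = AA x s s"

lemma xl_minus: "xl (- u) = - xl u"
  by (simp add: xl_def)

lemma AA_0: "AA x s 0 = 0"
  by (simp add: AA_def xl_minus xl_def)

lemma AA_cont: "continuous_on UNIV (AA x s)"
  unfolding AA_def by (auto intro!: continuous_intros)

lemma Kf_meas[measurable]: "Kf x \<in> borel_measurable borel"
  unfolding Kf_def by measurable

lemma Kf_poly_has_integral: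
  assumes s: "s > 0"
  shows "((\<lambda>y. Kf x y * (s\<^sup>2 - y\<^sup>2)) has_integral PP x s) {0..s}"
proof -
  have "((\<lambda>y. Kf x y * (s\<^sup>2 - y\<^sup>2)) has_integral (AA x s s - AA x s 0)) {0..s}"
  proof (rule fundamental_theorem_of_calculus_interior_strong[where S="{x, -x}"])
    show "continuous_on {0..s} (AA x s)" using AA_cont continuous_on_subset by blast
    fix y assume y: "y \<in> {0<..<s} - {x, - x}"
    then have "y \<noteq> 0" "y \<noteq> x" "y \<noteq> -x" by auto
    then show "(AA x s has_vector_derivative Kf x y * (s\<^sup>2 - y\<^sup>2)) (at y)"
      using AA_deriv[of y x s] Kf_KL[of y x] by (simp add: has_real_derivative_iff_has_vector_derivative)
  qed (use s in auto)
  then show ?thesis by (simp add: AA_0 PP_def)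
qed

lemma Kf_poly_integrable:
  assumes s: "s \<ge> 0"
  shows "set_integrable lborel {0..s} (\<lambda>y. Kf x y * (s\<^sup>2 - y\<^sup>2))"
proof -
  have i: "integrable lborel (\<lambda>y. indicator {0<..} y * Kf x y)"
    using Kf_integral[of x] by (simp add: set_integrable_def)
  have "integrable lborel (\<lambda>y. indicator {0..s} y * (Kf x y * (s\<^sup>2 - y\<^sup>2)))"
  proof (rule Bochner_Integration.integrable_bound[OF integrable_mult_right[OF i, of "s\<^sup>2"]])
    show "(\<lambda>y. indicator {0..s} y * (Kf x y * (s\<^sup>2 - y\<^sup>2))) \<in> borel_measurable lborel"
      by measurable
    show "AE y in lborel. norm (indicator {0..s} y * (Kf x y * (s\<^sup>2 - y\<^sup>2)))
        \<le> norm (s\<^sup>2 * (indicator {0<..} y * Kf x y))"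
    proof (rule AE_I2)
      fix y
      show "norm (indicator {0..s} y * (Kf x y * (s\<^sup>2 - y\<^sup>2))) \<le> norm (s\<^sup>2 * (indicator {0<..} y * Kf x y))"
      proof (cases "y \<in> {0<..s}")
        case True
        then have "y\<^sup>2 \<le> s\<^sup>2" using s by (auto intro: power_mono)
        then have "\<bar>s\<^sup>2 - y\<^sup>2\<bar> \<le> s\<^sup>2" by simp
        then have "\<bar>Kf x y\<bar> * \<bar>s\<^sup>2 - y\<^sup>2\<bar> \<le> \<bar>Kf x y\<bar> * s\<^sup>2" by (intro mult_left_mono) auto
        then show ?thesis using True by (simp add: abs_mult mult.commute)
      next
        case False
        then have "y \<notin> {0..s} \<or> y = 0" by auto
        then show ?thesis by (auto simp: Kf_def)
      qed
    qed
  qed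
  then show ?thesis by (simp add: set_integrable_def)
qed

lemma Kf_poly_integral:
  assumes s: "s \<ge> 0"
  shows "(LBINT y:{0..s}. Kf x y * (s\<^sup>2 - y\<^sup>2)) = PP x s"
proof (cases "s = 0")
  case True
  have "(\<lambda>y. indicator {0..s} y *\<^sub>R (Kf x y * (s\<^sup>2 - y\<^sup>2))) = (\<lambda>y. 0)"
    by (auto simp: True indicator_def fun_eq_iff)
  then have "(LBINT y:{0..s}. Kf x y * (s\<^sup>2 - y\<^sup>2)) = (LBINT y. 0)"
    unfolding set_lebesgue_integral_def by simp
  then show ?thesis by (simp add: True PP_def AA_0)
next
  case False
  then have "s > 0" using s by auto
  from set_borel_integral_eq_integral(2)[OF Kf_poly_integrable[OF s]] Kf_poly_has_integral[OF this]
  show ?thesis by (simp add: integral_unique)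
qed

lemma Kf_weight_integral:
  assumes s: "s \<ge> 0"
  shows "set_integrable lborel {0<..} (\<lambda>y. Kf x y * (1 - min (y\<^sup>2) (s\<^sup>2)))
    \<and> (LBINT y:{0<..}. Kf x y * (1 - min (y\<^sup>2) (s\<^sup>2))) = PP x s"
proof -
  have i1: "integrable lborel (\<lambda>y. indicator {0<..} y * Kf x y)"
    using Kf_integral[of x] by (simp add: set_integrable_def)
  have i2: "integrable lborel (\<lambda>y. indicator {0..s} y * (Kf x y * (s\<^sup>2 - y\<^sup>2)))"
    using Kf_poly_integrable[OF s, of x] by (simp add: set_integrable_def)
  have eq: "indicator {0<..} y * (Kf x y * (1 - min (y\<^sup>2) (s\<^sup>2)))
      = (1 - s\<^sup>2) * (indicator {0<..} y * Kf x y) + indicator {0..s} y * (Kf x y * (s\<^sup>2 - y\<^sup>2))" for y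
  proof (cases "y > 0")
    case True
    show ?thesis
    proof (cases "y \<le> s")
      case True
      then have "y\<^sup>2 \<le> s\<^sup>2" using \<open>y > 0\<close> by (simp add: power_mono)
      then show ?thesis using True \<open>y > 0\<close> by (simp add: indicator_def algebra_simps min_def)
    next
      case False
      then have "s\<^sup>2 < y\<^sup>2" using s by (simp add: power_strict_mono)
      then show ?thesis using False \<open>y > 0\<close> by (simp add: indicator_def algebra_simps min_def)
    qed
  next
    case False
    then show ?thesis by (cases "y = 0") (auto simp: indicator_def Kf_def)
  qed
  have "integrable lborel (\<lambda>y. indicator {0<..} y * (Kf x y * (1 - min (y\<^sup>2) (s\<^sup>2))))"
    unfolding eq using i1 i2 by auto
  moreover have "(LBINT y:{0<..}. Kf x y * (1 - min (y\<^sup>2) (s\<^sup>2))) = (1 - s\<^sup>2) * 0 + PP x s"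
    unfolding set_lebesgue_integral_def real_scaleR_def eq using i1 i2 Kf_integral[of x] Kf_poly_integral[OF s, of x]
    by (simp add: set_lebesgue_integral_def)
  ultimately show ?thesis by (simp add: set_integrable_def)
qed


definition x2l :: "real \<Rightarrow> real" where "x2l u = u * xl u"

lemma x2l_deriv0: "(x2l has_real_derivative 0) (at 0)"
proof -
  have "((\<lambda>h. (x2l h - x2l 0) / (h - 0)) \<longlongrightarrow> 0) (at 0)"
  proof (rule Lim_transform_eventually[OF xlnabs_tendsto0])
    show "\<forall>\<^sub>F h in at 0. h * ln \<bar>h\<bar> = (x2l h - x2l 0) / (h - 0)"
      by (auto simp: eventually_at_filter x2l_def xl_def)
  qed
  then show ?thesis by (simp add: has_field_derivative_iff)
qed

lemma x2l_deriv_at: "(x2l has_real_derivative 2 * xl u + u) (at u)"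
proof (cases "u = 0")
  case True
  then show ?thesis using x2l_deriv0 by (simp add: xl_def)
next
  case False
  have "((\<lambda>u. u * xl u) has_real_derivative 1 * xl u + (ln \<bar>u\<bar> + 1) * 1 * u) (at u)"
    by (intro DERIV_mult DERIV_ident xl_deriv[of "\<lambda>u. u", simplified] False)
  then show ?thesis unfolding x2l_def by (simp add: xl_def algebra_simps)
qed

lemma x2l_deriv[derivative_intros]:
  "(f has_real_derivative f') (at y) \<Longrightarrow> ((\<lambda>y. x2l (f y)) has_real_derivative (2 * xl (f y) + f y) * f') (at y)"
  using DERIV_chain2[OF x2l_deriv_at] .

lemma PP_alt: "PP x s = (2 * s - x) / 3 * x2l (s + x) + (2 * s + x) / 3 * x2l (s - x)
    - 4 / 3 * s\<^sup>2 * xl s + 2 / 3 * x\<^sup>2 * s"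
  unfolding PP_def AA_def x2l_def
  by (simp add: field_simps power2_eq_square add.commute)

definition Dx :: "real \<Rightarrow> real \<Rightarrow> real" where
  "Dx x s = (s - x) * xl (s + x) - (s + x) * xl (s - x) + 2 * s * x"

lemma PP_deriv: "((\<lambda>x. PP x s) has_real_derivative Dx x s) (at x)"
proof -
  have g1: "((\<lambda>x. s + x) has_real_derivative 1) (at x)" by (auto intro!: derivative_eq_intros)
  have g2: "((\<lambda>x. s - x) has_real_derivative -1) (at x)" by (auto intro!: derivative_eq_intros)
  have c1: "((\<lambda>x. (2 * s - x) / 3) has_real_derivative -1/3) (at x)" by (auto intro!: derivative_eq_intros)
  have c2: "((\<lambda>x. (2 * s + x) / 3) has_real_derivative 1/3) (at x)" by (auto intro!: derivative_eq_intros)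
  have c3: "((\<lambda>x. 4 / 3 * s\<^sup>2 * xl s) has_real_derivative 0) (at x)" by (auto intro!: derivative_eq_intros)
  have c4: "((\<lambda>x. 2 / 3 * x\<^sup>2 * s) has_real_derivative 4 / 3 * x * s) (at x)"
    by (auto intro!: derivative_eq_intros)
  have "((\<lambda>x. PP x s) has_real_derivative
      (-1/3 * x2l (s + x) + (2 * xl (s + x) + (s + x)) * 1 * ((2 * s - x) / 3))
    + (1/3 * x2l (s - x) + (2 * xl (s - x) + (s - x)) * -1 * ((2 * s + x) / 3))
    - 0 + 4 / 3 * x * s) (at x)"
    unfolding PP_alt
    by (intro DERIV_add DERIV_diff DERIV_mult c1 c2 c3 c4 x2l_deriv g1 g2)
  moreover have "(-1/3 * x2l (s + x) + (2 * xl (s + x) + (s + x)) * 1 * ((2 * s - x) / 3))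
    + (1/3 * x2l (s - x) + (2 * xl (s - x) + (s - x)) * -1 * ((2 * s + x) / 3))
    - 0 + 4 / 3 * x * s = Dx x s"
    unfolding Dx_def x2l_def by (simp add: field_simps)
  ultimately show ?thesis by simp
qed

lemma PP_cont: "continuous_on UNIV (\<lambda>x. PP x s)"
  using PP_deriv DERIV_isCont continuous_at_imp_continuous_on by blast

lemma Dx_cont: "continuous_on UNIV (\<lambda>x. Dx x s)"
  unfolding Dx_def by (intro continuous_intros)

lemma PP_zero: "PP 0 s = 0"
  by (simp add: PP_def AA_0[symmetric] AA_def)

lemma PP_s0: "PP x 0 = 0"
  unfolding PP_alt by (simp add: x2l_def xl_def)


lemma ln_abs_deriv[derivative_intros]:
  "(f has_real_derivative f') (at y) \<Longrightarrow> f y \<noteq> 0 \<Longrightarrow>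
   ((\<lambda>y. ln \<bar>f y\<bar>) has_real_derivative f' / f y) (at y)"
  using DERIV_chain2[OF DERIV_ln_abs] by (simp add: divide_simps)

lemma LN_lower: fixes w :: real assumes "0 \<le> w" "w < 1" shows "2 * w \<le> ln (1 + w) - ln (1 - w)"
proof -
  let ?f = "\<lambda>w. ln (1 + w) - ln (1 - w) - 2 * w"
  have "?f 0 \<le> ?f w"
  proof (rule DERIV_nonneg_imp_nondecreasing[OF assms(1)])
    fix x assume x: "0 \<le> x" "x \<le> w"
    then have x1: "x < 1" using assms by auto
    have "(?f has_real_derivative 1 / (1 + x) - (-1) / (1 - x) - 2) (at x)"
      using x x1 by (auto intro!: derivative_eq_intros)
    moreover have "1 / (1 + x) - (-1) / (1 - x) - 2 \<ge> 0"
    proof -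
      have "1 / (1 + x) - (-1) / (1 - x) - 2 = 2 * x\<^sup>2 / ((1 + x) * (1 - x))"
        using x x1 by (simp add: divide_simps power2_eq_square) (simp add: algebra_simps)
      also have "\<dots> \<ge> 0" using x x1 by (intro divide_nonneg_pos) auto
      finally show ?thesis .
    qed
    ultimately show "\<exists>y. (?f has_real_derivative y) (at x) \<and> 0 \<le> y" by blast
  qed
  then show ?thesis by simp
qed

lemma LN_upper: fixes w :: real assumes "0 \<le> w" "w < 1" shows "ln (1 + w) - ln (1 - w) \<le> 2 * w / (1 - w\<^sup>2)"
proof -
  let ?f = "\<lambda>w. 2 * w / (1 - w\<^sup>2) - (ln (1 + w) - ln (1 - w))"
  have "?f 0 \<le> ?f w"
  proof (rule DERIV_nonneg_imp_nondecreasing[OF assms(1)])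
    fix x assume x: "0 \<le> x" "x \<le> w"
    then have x1: "x < 1" using assms by auto
    have "x * x \<le> x * 1" by (rule mult_left_mono) (use x x1 in auto)
    then have ne: "1 - x\<^sup>2 \<noteq> 0" using x1 by (simp add: power2_eq_square)
    have "(?f has_real_derivative (2 * (1 - x\<^sup>2) - 2 * x * (- (2 * x))) / (1 - x\<^sup>2)\<^sup>2 - (1 / (1 + x) - (-1) / (1 - x))) (at x)"
      using x x1 ne by (auto intro!: derivative_eq_intros simp: power2_eq_square)
    moreover have "(2 * (1 - x\<^sup>2) - 2 * x * (- (2 * x))) / (1 - x\<^sup>2)\<^sup>2 - (1 / (1 + x) - (-1) / (1 - x)) \<ge> 0"
    proof -
      have "(2 * (1 - x\<^sup>2) - 2 * x * (- (2 * x))) / (1 - x\<^sup>2)\<^sup>2 - (1 / (1 + x) - (-1) / (1 - x))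
          = 4 * x\<^sup>2 / (1 - x\<^sup>2)\<^sup>2"
      proof -
        have f: "1 - x\<^sup>2 = (1 - x) * (1 + x)" by (simp add: algebra_simps power2_eq_square)
        have "1 - x \<noteq> 0" "1 + x \<noteq> 0" using x x1 by auto
        then show ?thesis unfolding f by (simp add: divide_simps power2_eq_square)
      qed
      also have "\<dots> \<ge> 0" by simp
      finally show ?thesis .
    qed
    ultimately show "\<exists>y. (?f has_real_derivative y) (at x) \<and> 0 \<le> y" by blast
  qed
  then show ?thesis by simp
qed

lemma Dx_L: "Dx x s = (s\<^sup>2 - x\<^sup>2) * (ln \<bar>s + x\<bar> - ln \<bar>s - x\<bar>) + 2 * s * x"
  unfolding Dx_def xl_def by (simp add: algebra_simps power2_eq_square)

lemma L_small: fixes x s :: real assumes "0 \<le> x" "x < s"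
  shows "2 * x / s \<le> ln \<bar>s + x\<bar> - ln \<bar>s - x\<bar>"
    and "ln \<bar>s + x\<bar> - ln \<bar>s - x\<bar> \<le> 2 * s * x / (s\<^sup>2 - x\<^sup>2)"
proof -
  have s: "s > 0" using assms by auto
  define w where "w = x / s"
  have w: "0 \<le> w" "w < 1" using assms s by (auto simp: w_def field_simps)
  have e: "ln \<bar>s + x\<bar> - ln \<bar>s - x\<bar> = ln (1 + w) - ln (1 - w)"
  proof -
    have "s + x = s * (1 + w)" "s - x = s * (1 - w)" using s by (auto simp: w_def field_simps)
    then show ?thesis using s w assms by (simp add: ln_mult)
  qed
  show "2 * x / s \<le> ln \<bar>s + x\<bar> - ln \<bar>s - x\<bar>"
    using LN_lower[OF w] unfolding e by (simp add: w_def)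
  have "2 * w / (1 - w\<^sup>2) = 2 * s * x / (s\<^sup>2 - x\<^sup>2)"
    using s assms by (simp add: w_def field_simps power2_eq_square)
  then show "ln \<bar>s + x\<bar> - ln \<bar>s - x\<bar> \<le> 2 * s * x / (s\<^sup>2 - x\<^sup>2)"
    using LN_upper[OF w] unfolding e by simp
qed

lemma L_large: fixes x s :: real assumes "0 < s" "s < x"
  shows "2 * s / x \<le> ln \<bar>s + x\<bar> - ln \<bar>s - x\<bar>"
    and "ln \<bar>s + x\<bar> - ln \<bar>s - x\<bar> \<le> 2 * s * x / (x\<^sup>2 - s\<^sup>2)"
proof -
  have e1: "ln \<bar>s + x\<bar> = ln \<bar>x + s\<bar>" by (simp add: add.commute)
  have e2: "ln \<bar>s - x\<bar> = ln \<bar>x - s\<bar>" by (simp add: abs_minus_commute)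
  have e3: "2 * x * s = 2 * s * x" by simp
  have "0 \<le> s" "s < x" using assms by auto
  note L = L_small[OF this]
  show "2 * s / x \<le> ln \<bar>s + x\<bar> - ln \<bar>s - x\<bar>" unfolding e1 e2 by (rule L(1))
  show "ln \<bar>s + x\<bar> - ln \<bar>s - x\<bar> \<le> 2 * s * x / (x\<^sup>2 - s\<^sup>2)" unfolding e1 e2 using L(2) by (simp only: e3)
qed

lemma Dx_nonneg_le: fixes x s :: real assumes "0 \<le> x" "0 \<le> s" shows "0 \<le> Dx x s \<and> Dx x s \<le> 4 * s\<^sup>2"
proof -
  consider "s = 0" | "0 < s" "x < s" | "0 < s" "x = s" | "0 < s" "s < x" using assms by linarith
  then show ?thesis
  proof cases
    case 1 then show ?thesis by (simp add: Dx_L)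
  next
    case 2
    note L = L_small[OF assms(1) 2(2)]
    have p: "0 < s\<^sup>2 - x\<^sup>2" using 2 assms by (simp add: power_strict_mono)
    define N where "N = (s\<^sup>2 - x\<^sup>2) * (ln \<bar>s + x\<bar> - ln \<bar>s - x\<bar>)"
    have "0 \<le> 2 * x / s" using assms 2 by simp
    then have A: "0 \<le> N" unfolding N_def using L(1) p by simp
    have "N \<le> (s\<^sup>2 - x\<^sup>2) * (2 * s * x / (s\<^sup>2 - x\<^sup>2))"
      unfolding N_def using L(2) p by (intro mult_left_mono) auto
    also have "(s\<^sup>2 - x\<^sup>2) * (2 * s * x / (s\<^sup>2 - x\<^sup>2)) = 2 * s * x" using p by simp
    finally have B: "N \<le> 2 * s * x" .
    have "s * x \<le> s * s" using 2 assms by (intro mult_left_mono) auto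
    then have C: "2 * s * x \<le> 2 * s\<^sup>2" by (simp add: power2_eq_square)
    have D: "0 \<le> 2 * s * x" using assms by simp
    have "Dx x s = N + 2 * s * x" unfolding Dx_L N_def ..
    then show ?thesis using A B C D by linarith
  next
    case 3 then show ?thesis by (simp add: Dx_L power2_eq_square)
  next
    case 4
    note L = L_large[OF 4]
    have p: "0 < x\<^sup>2 - s\<^sup>2" using 4 by (simp add: power_strict_mono)
    have "(x\<^sup>2 - s\<^sup>2) * (ln \<bar>s + x\<bar> - ln \<bar>s - x\<bar>) \<le> (x\<^sup>2 - s\<^sup>2) * (2 * s * x / (x\<^sup>2 - s\<^sup>2))"
      using L(2) p by (intro mult_left_mono) auto
    moreover have "(x\<^sup>2 - s\<^sup>2) * (2 * s * x / (x\<^sup>2 - s\<^sup>2)) = 2 * s * x" using p by simp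
    moreover have "(x\<^sup>2 - s\<^sup>2) * (2 * s / x) \<le> (x\<^sup>2 - s\<^sup>2) * (ln \<bar>s + x\<bar> - ln \<bar>s - x\<bar>)"
      using L(1) p by (intro mult_left_mono) auto
    moreover have "2 * s * x - (x\<^sup>2 - s\<^sup>2) * (2 * s / x) = 2 * s ^ 3 / x"
      using 4 by (simp add: field_simps power2_eq_square power3_eq_cube)
    moreover have "2 * s ^ 3 / x \<le> 2 * s\<^sup>2"
      using 4 by (simp add: field_simps power2_eq_square power3_eq_cube mult_left_mono)
    moreover have "(s\<^sup>2 - x\<^sup>2) * (ln \<bar>s + x\<bar> - ln \<bar>s - x\<bar>) = - ((x\<^sup>2 - s\<^sup>2) * (ln \<bar>s + x\<bar> - ln \<bar>s - x\<bar>))"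
      by (simp add: algebra_simps)
    ultimately show ?thesis unfolding Dx_L using 4 by (smt (verit) zero_le_power2)
  qed
qed

lemma Dx_odd: "Dx (- x) s = - Dx x s"
  unfolding Dx_def by (simp add: algebra_simps)

lemma Dx_bound: fixes x s :: real assumes "0 \<le> s" shows "\<bar>Dx x s\<bar> \<le> 4 * s\<^sup>2"
proof (cases "x \<ge> 0")
  case True then show ?thesis using Dx_nonneg_le[OF True assms] by auto
next
  case False
  then have "0 \<le> - x" by simp
  from Dx_nonneg_le[OF this assms] show ?thesis by (auto simp: Dx_odd)
qed


definition EE :: "real \<Rightarrow> real \<Rightarrow> real" where
  "EE x s = Dx x s / (2 * x)"

lemma EE_deriv:
  fixes x s :: real
  assumes "0 < x" "x \<noteq> s" "0 < s"
  shows "((\<lambda>x. EE x s) has_real_derivative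
     (2 * s * x - (s\<^sup>2 + x\<^sup>2) * (ln \<bar>s + x\<bar> - ln \<bar>s - x\<bar>)) / (2 * x\<^sup>2)) (at x)"
proof -
  have ne: "s + x \<noteq> 0" "s - x \<noteq> 0" "x \<noteq> 0" using assms by auto
  have EEe: "(\<lambda>x. EE x s) = (\<lambda>x. ((s\<^sup>2 - x\<^sup>2) * (ln \<bar>s + x\<bar> - ln \<bar>s - x\<bar>) + 2 * s * x) / (2 * x))"
    by (simp add: EE_def Dx_L fun_eq_iff)
  have "((\<lambda>x. ((s\<^sup>2 - x\<^sup>2) * (ln \<bar>s + x\<bar> - ln \<bar>s - x\<bar>) + 2 * s * x) / (2 * x)) has_real_derivative
     (((- (2 * x)) * (ln \<bar>s + x\<bar> - ln \<bar>s - x\<bar>) + (1 / (s + x) - (-1) / (s - x)) * (s\<^sup>2 - x\<^sup>2) + 2 * s) * (2 * x)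
       - ((s\<^sup>2 - x\<^sup>2) * (ln \<bar>s + x\<bar> - ln \<bar>s - x\<bar>) + 2 * s * x) * 2) / (2 * x)\<^sup>2) (at x)"
    using ne by (auto intro!: derivative_eq_intros simp: power2_eq_square)
  moreover have "(((- (2 * x)) * (ln \<bar>s + x\<bar> - ln \<bar>s - x\<bar>) + (1 / (s + x) - (-1) / (s - x)) * (s\<^sup>2 - x\<^sup>2) + 2 * s) * (2 * x)
       - ((s\<^sup>2 - x\<^sup>2) * (ln \<bar>s + x\<bar> - ln \<bar>s - x\<bar>) + 2 * s * x) * 2) / (2 * x)\<^sup>2
     = (2 * s * x - (s\<^sup>2 + x\<^sup>2) * (ln \<bar>s + x\<bar> - ln \<bar>s - x\<bar>)) / (2 * x\<^sup>2)"
  proof -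
    define L where "L = ln \<bar>s + x\<bar> - ln \<bar>s - x\<bar>"
    have f: "(1 / (s + x) - (-1) / (s - x)) * (s\<^sup>2 - x\<^sup>2) = 2 * s"
      using ne by (simp add: divide_simps power2_eq_square) (simp add: algebra_simps)
    show ?thesis unfolding L_def[symmetric] f using ne
      by (simp add: divide_simps power2_eq_square) (simp add: algebra_simps)
  qed
  ultimately show ?thesis unfolding EEe by simp
qed

lemma EE_deriv_nonpos:
  fixes x s :: real
  assumes "0 < x" "x \<noteq> s" "0 < s"
  shows "(2 * s * x - (s\<^sup>2 + x\<^sup>2) * (ln \<bar>s + x\<bar> - ln \<bar>s - x\<bar>)) / (2 * x\<^sup>2) \<le> 0"
proof -
  define L where "L = ln \<bar>s + x\<bar> - ln \<bar>s - x\<bar>"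
  have "2 * s * x \<le> (s\<^sup>2 + x\<^sup>2) * L"
  proof (cases "x < s")
    case True
    have "2 * x / s \<le> L" using L_small(1)[of x s] True assms unfolding L_def by auto
    then have "(s\<^sup>2 + x\<^sup>2) * (2 * x / s) \<le> (s\<^sup>2 + x\<^sup>2) * L" by (intro mult_left_mono) auto
    moreover have "2 * s * x \<le> (s\<^sup>2 + x\<^sup>2) * (2 * x / s)"
      using assms by (simp add: field_simps power2_eq_square)
    ultimately show ?thesis by linarith
  next
    case False
    then have xs: "s < x" using assms by auto
    have "2 * s / x \<le> L" using L_large(1)[of s x] xs assms unfolding L_def by auto
    then have "(s\<^sup>2 + x\<^sup>2) * (2 * s / x) \<le> (s\<^sup>2 + x\<^sup>2) * L" by (intro mult_left_mono) auto
    moreover have "2 * s * x \<le> (s\<^sup>2 + x\<^sup>2) * (2 * s / x)"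
      using assms by (simp add: field_simps power2_eq_square)
    ultimately show ?thesis by linarith
  qed
  then show ?thesis unfolding L_def[symmetric] by (intro divide_nonpos_nonneg) auto
qed

lemma EE_cont: "continuous_on {0<..} (\<lambda>x. EE x s)"
  unfolding EE_def Dx_def by (auto intro!: continuous_intros)

lemma EE_antitone:
  fixes a b s :: real
  assumes "0 < a" "a \<le> b" "0 \<le> s"
  shows "EE b s \<le> EE a s"
proof (cases "s = 0")
  case True
  then show ?thesis by (simp add: EE_def Dx_def xl_def)
next
  case False
  then have s: "0 < s" using assms by auto
  have piece: "EE v s \<le> EE u s" if uv: "0 < u" "u \<le> v" "s \<le> u \<or> v \<le> s" for u v
  proof (rule DERIV_nonpos_imp_decreasing_open[OF uv(2)])
    fix x assume x: "u < x" "x < v"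
    then have "x \<noteq> s" using uv by auto
    then show "\<exists>y. ((\<lambda>x. EE x s) has_real_derivative y) (at x) \<and> y \<le> 0"
      using EE_deriv[of x s] EE_deriv_nonpos[of x s] x uv s by auto
  next
    show "continuous_on {u..v} (\<lambda>x. EE x s)"
      by (rule continuous_on_subset[OF EE_cont]) (use uv in auto)
  qed
  show ?thesis
  proof (cases "s \<le> a \<or> b \<le> s")
    case True then show ?thesis using piece[of a b] assms by auto
  next
    case False
    then have "a < s" "s < b" by auto
    then show ?thesis using piece[of a s] piece[of s b] assms s by fastforce
  qed
qed

lemma concave_from_deriv:
  fixes f f' :: "real \<Rightarrow> real"
  assumes cont: "continuous_on {0..} f"
    and der: "\<And>x. 0 < x \<Longrightarrow> (f has_real_derivative f' x) (at x)"
    and mono: "\<And>x y. 0 < x \<Longrightarrow> x \<le> y \<Longrightarrow> f' y \<le> f' x"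
  shows "concave_on {0..} f"
proof (rule concave_on_linorderI)
  show "convex {0::real..}" by (simp add: convex_real_interval)
  fix t x y :: real
  assume t: "t > 0" "t < 1" and xy: "x \<in> {0..}" "y \<in> {0..}" "x < y"
  define z where "z = (1 - t) * x + t * y"
  have e1: "z - x = t * (y - x)" and e2: "y - z = (1 - t) * (y - x)" by (simp_all add: z_def algebra_simps)
  have "0 < t * (y - x)" using t xy by simp
  then have xz: "x < z" using e1 by linarith
  have "0 < (1 - t) * (y - x)" using t xy by simp
  then have zy: "z < y" using e2 by linarith
  have x0: "0 \<le> x" using xy by auto
  have mvt: "\<exists>w. a < w \<and> w < b \<and> f b - f a = (b - a) * f' w" if ab: "0 \<le> a" "a < b" for a b
  proof -
    have c: "continuous_on {a..b} f" by (rule continuous_on_subset[OF cont]) (use ab in auto)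
    have d: "f differentiable (at w)" if "a < w" "w < b" for w
      using der[of w] ab that real_differentiable_def by force
    obtain l w where w: "a < w" "w < b" "DERIV f w :> l" "f b - f a = (b - a) * l"
      using MVT[OF ab(2) c d] by blast
    have "l = f' w" using DERIV_unique[OF w(3) der[of w]] w ab by auto
    then show ?thesis using w by blast
  qed
  obtain z1 where z1: "x < z1" "z1 < z" "f z - f x = (z - x) * f' z1" using mvt[OF x0 xz] by blast
  obtain z2 where z2: "z < z2" "z2 < y" "f y - f z = (y - z) * f' z2" using mvt[of z y] x0 xz zy by auto
  have l: "f' z2 \<le> f' z1" using mono[of z1 z2] z1 z2 x0 by auto
  have "t * (f y - f z) = t * (1 - t) * (y - x) * f' z2" using z2(3) e2 by simp
  also have "\<dots> \<le> t * (1 - t) * (y - x) * f' z1"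
    using l t xy by (intro mult_left_mono) auto
  also have "\<dots> = (1 - t) * (f z - f x)" using z1(3) e1 by simp
  finally have "t * (f y - f z) \<le> (1 - t) * (f z - f x)" .
  then have ineq: "t * f y - t * f z \<le> (1 - t) * f z - (1 - t) * f x"
    by (simp only: right_diff_distrib)
  have "(1 - t) * f z + t * f z = f z" by (simp add: algebra_simps)
  moreover have zz: "(1 - t) *\<^sub>R x + t *\<^sub>R y = z" by (simp add: z_def)
  ultimately show "(1 - t) * f x + t * f y \<le> f ((1 - t) *\<^sub>R x + t *\<^sub>R y)"
    unfolding zz using ineq by linarith
qed

lemma PP_sqrt_concave:
  fixes s :: real assumes s: "0 \<le> s"
  shows "concave_on {0..} (\<lambda>\<sigma>. PP (sqrt \<sigma>) s)"
proof (rule concave_from_deriv[where f'="\<lambda>\<sigma>. EE (sqrt \<sigma>) s"])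
  show "continuous_on {0..} (\<lambda>\<sigma>. PP (sqrt \<sigma>) s)"
    by (rule continuous_on_compose2[OF PP_cont[of s] _ subset_UNIV]) (intro continuous_intros)
  fix x :: real assume x: "0 < x"
  have "((\<lambda>\<sigma>. PP (sqrt \<sigma>) s) has_real_derivative Dx (sqrt x) s * (inverse (sqrt x) / 2)) (at x)"
    using DERIV_chain2[OF PP_deriv DERIV_real_sqrt[OF x]] .
  moreover have "Dx a s * (inverse a / 2) = EE a s" for a
    unfolding EE_def by (simp add: field_simps)
  ultimately show "((\<lambda>\<sigma>. PP (sqrt \<sigma>) s) has_real_derivative EE (sqrt x) s) (at x)"
    by simp
next
  fix x y :: real assume "0 < x" "x \<le> y"
  then have "0 < sqrt x" "sqrt x \<le> sqrt y" by auto
  then show "EE (sqrt y) s \<le> EE (sqrt x) s"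
    using EE_antitone[of "sqrt x" "sqrt y" s] s by blast
qed


definition cvxg :: "(real \<Rightarrow> real) \<Rightarrow> bool" where
  "cvxg g \<longleftrightarrow> convex_on {0..} g \<and> (\<forall>u v. 0 \<le> u \<longrightarrow> u \<le> v \<longrightarrow> g v \<le> g u) \<and> g 0 = 1
     \<and> (\<forall>u. 0 \<le> u \<longrightarrow> 1 - u \<le> g u) \<and> (\<forall>u. 0 \<le> u \<longrightarrow> 0 \<le> g u)"

definition psi :: "(real \<Rightarrow> real) \<Rightarrow> real \<Rightarrow> real" where
  "psi g u = Sup ((\<lambda>h. (g u - g (u + h)) / h) ` {0<..})"

lemma cvxg_conv: "cvxg g \<Longrightarrow> convex_on {0..} g" by (simp add: cvxg_def)
lemma cvxg_anti: "cvxg g \<Longrightarrow> 0 \<le> u \<Longrightarrow> u \<le> v \<Longrightarrow> g v \<le> g u" by (simp add: cvxg_def)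
lemma cvxg_g0: "cvxg g \<Longrightarrow> g 0 = 1" by (simp add: cvxg_def)
lemma cvxg_lower: "cvxg g \<Longrightarrow> 0 \<le> u \<Longrightarrow> 1 - u \<le> g u" by (simp add: cvxg_def)
lemma cvxg_nonneg: "cvxg g \<Longrightarrow> 0 \<le> u \<Longrightarrow> 0 \<le> g u" by (simp add: cvxg_def)

lemma slope_neg: "(a - b) / (c - (c + h)) = - ((a - b) / h)" for a b c h :: real
  by (simp add: field_simps)

lemma quot_nonneg: assumes "cvxg g" "0 \<le> u" "0 < h" shows "0 \<le> (g u - g (u + h)) / h"
  using cvxg_anti[OF assms(1,2), of "u + h"] assms by simp

lemma quot_le1: assumes "cvxg g" "0 \<le> u" "0 < h" shows "(g u - g (u + h)) / h \<le> 1"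
proof (cases "u = 0")
  case True
  have "1 - h \<le> g h" using assms cvxg_lower by auto
  moreover have "g 0 = 1" using assms cvxg_g0 by auto
  ultimately have "g u - g (u + h) \<le> h" using True by simp
  then show ?thesis using assms(3) by (simp add: divide_le_eq)
next
  case False
  then have u: "0 < u" using assms by auto
  have conv: "convex_on {0..} g" using assms cvxg_conv by auto
  have m: "0 \<in> {0::real..}" "u + h \<in> {0::real..}" "u < u + h" using u assms by auto
  have "(g 0 - g (u + h)) / (0 - (u + h)) \<le> (g u - g (u + h)) / (u - (u + h))"
    by (rule convex_on_slope_le(2)[OF conv m(1) m(2) u m(3)])
  also have "(g u - g (u + h)) / (u - (u + h)) = - ((g u - g (u + h)) / h)" by (rule slope_neg)
  also have "(g 0 - g (u + h)) / (0 - (u + h)) = - ((g 0 - g (u + h)) / (u + h))"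
    by (simp only: diff_0 divide_minus_right)
  finally have 1: "(g u - g (u + h)) / h \<le> (g 0 - g (u + h)) / (u + h)" by linarith
  have "1 - (u + h) \<le> g (u + h)" "g 0 = 1" using assms u cvxg_lower cvxg_g0 by auto
  then have "g 0 - g (u + h) \<le> u + h" by simp
  then have "(g 0 - g (u + h)) / (u + h) \<le> 1" using u assms by (simp add: divide_le_eq)
  with 1 show ?thesis by linarith
qed

lemma psi_bdd: assumes "cvxg g" "0 \<le> u" shows "bdd_above ((\<lambda>h. (g u - g (u + h)) / h) ` {0<..})"
  using quot_le1[OF assms] by (intro bdd_aboveI[of _ 1]) auto

lemma psi_ge: assumes "cvxg g" "0 \<le> u" "0 < h" shows "(g u - g (u + h)) / h \<le> psi g u"
  unfolding psi_def by (rule cSup_upper[OF _ psi_bdd[OF assms(1,2)]]) (use assms in auto)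

lemma psi_le1: assumes "cvxg g" "0 \<le> u" shows "psi g u \<le> 1"
  unfolding psi_def by (rule cSup_least) (use quot_le1[OF assms] in auto)

lemma psi_nonneg: assumes "cvxg g" "0 \<le> u" shows "0 \<le> psi g u"
  using quot_nonneg[OF assms, of 1] psi_ge[OF assms, of 1] by linarith

lemma psi_le_slope: assumes "cvxg g" "0 \<le> u" "u < v" shows "psi g v \<le> (g u - g v) / (v - u)"
  unfolding psi_def
proof (rule cSup_least)
  show "(\<lambda>h. (g v - g (v + h)) / h) ` {0<..} \<noteq> {}" by auto
  fix q assume "q \<in> (\<lambda>h. (g v - g (v + h)) / h) ` {0<..}"
  then obtain h where h: "0 < h" "q = (g v - g (v + h)) / h" by auto
  have conv: "convex_on {0..} g" using assms cvxg_conv by auto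
  have "(g u - g v) / (u - v) \<le> (g u - g (v + h)) / (u - (v + h))"
    by (rule convex_on_slope_le(1)[OF conv]) (use assms h in auto)
  also have "\<dots> \<le> (g v - g (v + h)) / (v - (v + h))"
    by (rule convex_on_slope_le(2)[OF conv]) (use assms h in auto)
  also have "\<dots> = - q" using h slope_neg by simp
  finally have "q \<le> - ((g u - g v) / (u - v))" by linarith
  also have "- ((g u - g v) / (u - v)) = (g u - g v) / (v - u)"
  proof -
    have "v - u = - (u - v)" by simp
    then show ?thesis by (simp only: divide_minus_right)
  qed
  finally show "q \<le> (g u - g v) / (v - u)" .
qed

lemma sandwich: assumes "cvxg g" "0 \<le> u" "u < v"
  shows "(v - u) * psi g v \<le> g u - g v" "g u - g v \<le> (v - u) * psi g u"
proof -
  have "psi g v \<le> (g u - g v) / (v - u)" by (rule psi_le_slope[OF assms])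
  then show "(v - u) * psi g v \<le> g u - g v" using assms by (simp add: le_divide_eq mult.commute)
  have "(g u - g (u + (v - u))) / (v - u) \<le> psi g u" by (rule psi_ge) (use assms in auto)
  then show "g u - g v \<le> (v - u) * psi g u" using assms by (simp add: divide_le_eq mult.commute)
qed

lemma psi_antitone: assumes "cvxg g" "0 \<le> u" "u \<le> v" shows "psi g v \<le> psi g u"
proof (cases "u = v")
  case False
  then have uv: "u < v" using assms by auto
  have "psi g v \<le> (g u - g v) / (v - u)" by (rule psi_le_slope[OF assms(1,2) uv])
  also have "(g u - g v) / (v - u) \<le> psi g u"
    using psi_ge[OF assms(1,2), of "v - u"] uv by simp
  finally show ?thesis .
qed simp


definition tt :: "(real \<Rightarrow> real) \<Rightarrow> real \<Rightarrow> real" where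
  "tt g \<tau> = (if \<tau> \<le> 0 then 0 else Sup (insert 0 {v. 0 \<le> v \<and> \<tau> < psi g v}))"

lemma tt_set_bound: assumes "cvxg g" "0 < \<tau>" "0 \<le> v" "\<tau> < psi g v" shows "v \<le> 1 / \<tau>"
proof (cases "v = 0")
  case False
  then have v: "0 < v" using assms by auto
  have "v * psi g v \<le> g 0 - g v" using sandwich(1)[OF assms(1) order.refl v] by simp
  also have "\<dots> \<le> 1" using assms v cvxg_g0 cvxg_nonneg by fastforce
  finally have "v * \<tau> \<le> 1" using assms v by (smt (verit) mult_strict_left_mono)
  then show ?thesis using assms by (simp add: le_divide_eq mult.commute)
qed (use assms in auto)

lemma tt_bdd: assumes "cvxg g" "0 < \<tau>" shows "bdd_above (insert 0 {v. 0 \<le> v \<and> \<tau> < psi g v})"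
  using tt_set_bound[OF assms] assms by (intro bdd_aboveI[of _ "1 / \<tau>"]) auto

lemma tt_nonneg: assumes "cvxg g" shows "0 \<le> tt g \<tau>"
proof (cases "\<tau> \<le> 0")
  case False
  then show ?thesis unfolding tt_def using cSup_upper[OF _ tt_bdd[OF assms, of \<tau>]] by auto
qed (simp add: tt_def)

lemma tt_le: assumes "cvxg g" "0 < \<tau>" shows "tt g \<tau> \<le> 1 / \<tau>"
  unfolding tt_def using assms tt_set_bound[OF assms] by (auto intro!: cSup_least)

lemma tt_ge: assumes "cvxg g" "0 < \<tau>" "0 \<le> v" "\<tau> < psi g v" shows "v \<le> tt g \<tau>"
  unfolding tt_def using assms cSup_upper[OF _ tt_bdd[OF assms(1,2)]] by auto

lemma tt_lt: assumes "cvxg g" "0 < \<tau>" "0 \<le> u" "u < tt g \<tau>" shows "\<tau> < psi g u"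
proof (rule ccontr)
  assume "\<not> \<tau> < psi g u"
  then have pu: "psi g u \<le> \<tau>" by simp
  have "tt g \<tau> \<le> u" unfolding tt_def using assms(2)
  proof (simp, intro cSup_least)
    fix v assume "v \<in> insert 0 {v. 0 \<le> v \<and> \<tau> < psi g v}"
    then show "v \<le> u"
    proof
      assume "v = 0" then show ?thesis using assms by simp
    next
      assume v: "v \<in> {v. 0 \<le> v \<and> \<tau> < psi g v}"
      show "v \<le> u"
      proof (rule ccontr)
        assume "\<not> v \<le> u"
        then have "psi g v \<le> psi g u" using psi_antitone[OF assms(1,3)] by simp
        then show False using v pu by simp
      qed
    qed
  qed simp
  then show False using assms by simp
qed

lemma tt_antitone: assumes "cvxg g" "0 < \<tau>1" "\<tau>1 \<le> \<tau>2" shows "tt g \<tau>2 \<le> tt g \<tau>1"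
  unfolding tt_def using assms by (auto intro!: cSup_subset_mono tt_bdd)

lemma tt_meas[measurable]: assumes "cvxg g" shows "tt g \<in> borel_measurable borel"
proof -
  have "(\<lambda>\<tau>. - tt g \<tau>) \<in> borel_measurable borel"
  proof (rule borel_measurable_piecewise_mono[of "{{..0}, {0<..}}"])
    show "mono_on c (\<lambda>\<tau>. - tt g \<tau>)" if "c \<in> {{..0}, {0<..}}" for c
      using that tt_antitone[OF assms] by (auto simp: mono_on_def tt_def)
  qed auto
  then show ?thesis using borel_measurable_uminus_eq by blast
qed


lemma tele:
  fixes D f :: "real \<Rightarrow> real"
  assumes H: "\<And>u v. 0 \<le> u \<Longrightarrow> u \<le> v \<Longrightarrow> \<bar>D v - D u\<bar> \<le> (v - u) * (f u - f v)"
    and F: "\<And>u. 0 \<le> u \<Longrightarrow> 0 \<le> f u \<and> f u \<le> 1"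
    and U: "0 \<le> U"
  shows "D U = D 0"
proof (rule ccontr)
  assume ne: "D U \<noteq> D 0"
  define d where "d = \<bar>D U - D 0\<bar>"
  have d: "d > 0" using ne by (simp add: d_def)
  have step: "\<bar>D (real k * U / real n) - D 0\<bar> \<le> (U / real n) * (f 0 - f (real k * U / real n))"
    if "n > 0" "k \<le> n" for n k
    using that(2)
  proof (induction k)
    case 0 then show ?case by simp
  next
    case (Suc k)
    define a where "a = real k * U / real n"
    define b where "b = real (Suc k) * U / real n"
    have "b - a = (real (Suc k) * U - real k * U) / real n" by (simp add: a_def b_def diff_divide_distrib)
    then have ab: "b - a = U / real n" by (simp add: algebra_simps)
    have a0: "0 \<le> a" using U by (simp add: a_def)
    have "U / real n \<ge> 0" using U by simp
    then have ab2: "a \<le> b" using ab by linarith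
    have "\<bar>D b - D 0\<bar> \<le> \<bar>D b - D a\<bar> + \<bar>D a - D 0\<bar>" by linarith
    also have "\<dots> \<le> (b - a) * (f a - f b) + (U / real n) * (f 0 - f a)"
      using H[OF a0 ab2] Suc by (simp add: a_def)
    also have "\<dots> = (U / real n) * (f 0 - f b)" by (simp add: ab algebra_simps)
    finally show ?case by (simp add: b_def)
  qed
  obtain n :: nat where n: "U / d < real n" using reals_Archimedean2 by blast
  have "0 \<le> U / d" using U d by simp
  then have n0: "n > 0" using n by (cases n) auto
  have "d \<le> (U / real n) * (f 0 - f U)"
    using step[OF n0 order.refl] n0 by (simp add: d_def)
  also have "\<dots> \<le> (U / real n) * 1"
    using F[of 0] F[OF U] U by (intro mult_left_mono) auto
  finally have "d \<le> U / real n" by simp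
  then have "d * real n \<le> U" using n0 by (simp add: le_divide_eq)
  moreover have "U < d * real n" using n d by (simp add: divide_less_eq mult.commute)
  ultimately show False by simp
qed

definition RR :: "(real \<Rightarrow> real) \<Rightarrow> real \<Rightarrow> real" where
  "RR g u = (LBINT \<tau>:{0<..<1}. min u (tt g \<tau>))"

lemma ind_Ioo_int: "integrable lborel (indicator {a<..<b::real} :: real \<Rightarrow> real)"
proof (cases "a \<le> b")
  case True
  then show ?thesis by (intro integrable_real_indicator) auto
next
  case False
  then have "{a<..<b} = {}" by auto
  then show ?thesis by simp
qed

lemma int_ind01: "integrable lborel (\<lambda>\<tau>::real. indicator {0<..<1} \<tau> * c)" for c :: real
  by (rule integrable_mult_left) (rule ind_Ioo_int)

lemma RR_int: assumes "cvxg g" "0 \<le> u"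
  shows "set_integrable lborel {0<..<1} (\<lambda>\<tau>. min u (tt g \<tau>))"
proof -
  have "integrable lborel (\<lambda>\<tau>. indicator {0<..<1} \<tau> * min u (tt g \<tau>))"
  proof (rule Bochner_Integration.integrable_bound[OF int_ind01[of u]])
    show "(\<lambda>\<tau>. indicator {0<..<1} \<tau> * min u (tt g \<tau>)) \<in> borel_measurable lborel"
      using tt_meas[OF assms(1)] by measurable
    show "AE \<tau> in lborel. norm (indicator {0<..<1} \<tau> * min u (tt g \<tau>)) \<le> norm (indicator {0<..<1} \<tau> * u)"
      using tt_nonneg[OF assms(1)] assms by (intro AE_I2) (auto simp: indicator_def)
  qed
  then show ?thesis by (simp add: set_integrable_def)
qed

lemma ind_int: assumes "0 \<le> p" "p \<le> 1"
  shows "set_integrable lborel {0<..<1} (\<lambda>\<tau>::real. c * indicator {..<p} \<tau>)"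
    "(LBINT \<tau>:{0<..<1}. c * indicator {..<p} \<tau>) = c * p"
proof -
  have e: "(\<lambda>\<tau>. indicator {0<..<1} \<tau> *\<^sub>R (c * indicator {..<p} \<tau>)) = (\<lambda>\<tau>::real. c * indicator {0<..<p} \<tau>)"
    using assms by (auto simp: indicator_def fun_eq_iff)
  show "set_integrable lborel {0<..<1} (\<lambda>\<tau>::real. c * indicator {..<p} \<tau>)"
    unfolding set_integrable_def e using ind_Ioo_int by (intro integrable_mult_right) auto
  show "(LBINT \<tau>:{0<..<1}. c * indicator {..<p} \<tau>) = c * p"
    unfolding set_lebesgue_integral_def e using assms by simp
qed

lemma RR_diff: assumes g: "cvxg g" and uv: "0 \<le> u" "u < v"
  shows "(v - u) * psi g v \<le> RR g v - RR g u" "RR g v - RR g u \<le> (v - u) * psi g u"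
proof -
  have v0: "0 \<le> v" using uv by simp
  have iu: "set_integrable lborel {0<..<1} (\<lambda>\<tau>. min u (tt g \<tau>))" by (rule RR_int[OF g uv(1)])
  have iv: "set_integrable lborel {0<..<1} (\<lambda>\<tau>. min v (tt g \<tau>))" by (rule RR_int[OF g v0])
  have dif: "RR g v - RR g u = (LBINT \<tau>:{0<..<1}. min v (tt g \<tau>) - min u (tt g \<tau>))"
    unfolding RR_def using set_integral_diff(2)[OF iv iu] by simp
  have idif: "set_integrable lborel {0<..<1} (\<lambda>\<tau>. min v (tt g \<tau>) - min u (tt g \<tau>))"
    using set_integral_diff(1)[OF iv iu] .
  have pu: "0 \<le> psi g u" "psi g u \<le> 1" using psi_nonneg[OF g uv(1)] psi_le1[OF g uv(1)] by auto
  have pv: "0 \<le> psi g v" "psi g v \<le> 1" using psi_nonneg[OF g v0] psi_le1[OF g v0] by auto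
  have "(LBINT \<tau>:{0<..<1}. min v (tt g \<tau>) - min u (tt g \<tau>)) \<le> (LBINT \<tau>:{0<..<1}. (v - u) * indicator {..<psi g u} \<tau>)"
  proof (rule set_integral_mono[OF idif ind_int(1)[OF pu]])
    fix \<tau> :: real assume t: "\<tau> \<in> {0<..<1}"
    show "min v (tt g \<tau>) - min u (tt g \<tau>) \<le> (v - u) * indicator {..<psi g u} \<tau>"
    proof (cases "u < tt g \<tau>")
      case True
      then have "\<tau> < psi g u" using tt_lt[OF g _ uv(1)] t by auto
      then show ?thesis using True uv by (auto simp: indicator_def)
    next
      case False
      then show ?thesis using uv by (auto simp: indicator_def min_def)
    qed
  qed
  then show "RR g v - RR g u \<le> (v - u) * psi g u" unfolding dif ind_int(2)[OF pu] .
  have "(LBINT \<tau>:{0<..<1}. (v - u) * indicator {..<psi g v} \<tau>) \<le> (LBINT \<tau>:{0<..<1}. min v (tt g \<tau>) - min u (tt g \<tau>))"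
  proof (rule set_integral_mono[OF ind_int(1)[OF pv] idif])
    fix \<tau> :: real assume t: "\<tau> \<in> {0<..<1}"
    show "(v - u) * indicator {..<psi g v} \<tau> \<le> min v (tt g \<tau>) - min u (tt g \<tau>)"
    proof (cases "\<tau> < psi g v")
      case True
      then have "v \<le> tt g \<tau>" using tt_ge[OF g _ v0] t by auto
      then show ?thesis using True uv by (auto simp: indicator_def)
    next
      case False
      then show ?thesis using uv by (auto simp: indicator_def min_def)
    qed
  qed
  then show "(v - u) * psi g v \<le> RR g v - RR g u" unfolding dif ind_int(2)[OF pv] .
qed

lemma RR_0: assumes "cvxg g" shows "RR g 0 = 0"
proof -
  have "min 0 (tt g \<tau>) = 0" for \<tau> using tt_nonneg[OF assms] by (simp add: min_def)
  then show ?thesis by (simp add: RR_def)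
qed

lemma g_rep0: assumes g: "cvxg g" and u: "0 \<le> u" shows "g u = 1 - RR g u"
proof -
  define D where "D x = g x + RR g x" for x
  have "D u = D 0"
  proof (rule tele[where f="psi g"])
    fix a b :: real assume ab: "0 \<le> a" "a \<le> b"
    show "\<bar>D b - D a\<bar> \<le> (b - a) * (psi g a - psi g b)"
    proof (cases "a = b")
      case False
      then have "a < b" using ab by simp
      from sandwich[OF g ab(1) this] RR_diff[OF g ab(1) this]
      show ?thesis unfolding D_def by (simp add: algebra_simps abs_le_iff)
    qed simp
  next
    fix a :: real assume "0 \<le> a"
    then show "0 \<le> psi g a \<and> psi g a \<le> 1" using psi_nonneg[OF g] psi_le1[OF g] by auto
  qed (rule u)
  then show ?thesis using cvxg_g0[OF g] RR_0[OF g] by (simp add: D_def)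
qed

lemma RR_le1: assumes g: "cvxg g" and u: "0 \<le> u" shows "RR g u \<le> 1"
  using g_rep0[OF assms] cvxg_nonneg[OF assms] by simp

lemma tt_int: assumes g: "cvxg g"
  shows "set_integrable lborel {0<..<1} (tt g)"
proof -
  define f where "f n \<tau> = indicator {0<..<1} \<tau> * min (real n) (tt g \<tau>)" for n :: nat and \<tau>
  have fi: "integrable lborel (f n)" for n
    using RR_int[OF g, of "real n"] unfolding set_integrable_def f_def by simp
  have mono: "AE \<tau> in lborel. mono (\<lambda>n. f n \<tau>)"
    by (intro AE_I2) (auto simp: mono_def f_def indicator_def intro!: min.mono)
  have lim: "AE \<tau> in lborel. (\<lambda>n. f n \<tau>) \<longlonglongrightarrow> indicator {0<..<1} \<tau> * tt g \<tau>"
  proof (intro AE_I2)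
    fix \<tau>
    have "eventually (\<lambda>n. f n \<tau> = indicator {0<..<1} \<tau> * tt g \<tau>) sequentially"
    proof -
      obtain N :: nat where "tt g \<tau> \<le> real N" using real_arch_simple by blast
      then show ?thesis by (auto simp: eventually_sequentially f_def intro!: exI[of _ N])
    qed
    then show "(\<lambda>n. f n \<tau>) \<longlonglongrightarrow> indicator {0<..<1} \<tau> * tt g \<tau>"
      by (rule tendsto_eventually)
  qed
  have inc: "incseq (\<lambda>n. integral\<^sup>L lborel (f n))"
    unfolding incseq_def using fi by (auto intro!: integral_mono simp: f_def indicator_def)
  have bd: "\<forall>n. integral\<^sup>L lborel (f n) \<le> 1"
  proof
    fix n :: nat
    have "RR g (real n) \<le> 1" by (rule RR_le1[OF g]) simp
    moreover have "f n = (\<lambda>\<tau>. indicator {0<..<1} \<tau> * min (real n) (tt g \<tau>))"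
      by (simp add: f_def fun_eq_iff)
    ultimately show "integral\<^sup>L lborel (f n) \<le> 1" by (simp add: RR_def set_lebesgue_integral_def)
  qed
  obtain L where L: "(\<lambda>n. integral\<^sup>L lborel (f n)) \<longlonglongrightarrow> L"
    using incseq_convergent[OF inc bd] by blast
  have "integrable lborel (\<lambda>\<tau>. indicator {0<..<1} \<tau> * tt g \<tau>)"
    by (rule integrable_monotone_convergence[OF fi mono lim L]) (use tt_meas[OF g] in measurable)
  then show ?thesis by (simp add: set_integrable_def)
qed

lemma g_rep: assumes g: "cvxg g" and u: "0 \<le> u"
  shows "g u = (LBINT \<tau>:{0<..<1}. 1 - min u (tt g \<tau>))"
proof -
  have i1: "set_integrable lborel {0<..<1} (\<lambda>\<tau>::real. 1::real)"
    unfolding set_integrable_def using ind_Ioo_int by simp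
  have c1: "(LBINT \<tau>:{0<..<1::real}. (1::real)) = 1" by (simp add: set_integral_const)
  have "(LBINT \<tau>:{0<..<1}. 1 - min u (tt g \<tau>)) = (LBINT \<tau>:{0<..<1::real}. (1::real)) - (LBINT \<tau>:{0<..<1}. min u (tt g \<tau>))"
    by (rule set_integral_diff(2)[OF i1 RR_int[OF g u]])
  then show ?thesis using c1 g_rep0[OF g u] by (simp add: RR_def)
qed


lemma lipschitz_from_deriv:
  fixes f f' :: "real \<Rightarrow> real"
  assumes der: "\<And>x. (f has_real_derivative f' x) (at x)" and bnd: "\<And>x. \<bar>f' x\<bar> \<le> B"
  shows "\<bar>f y - f x\<bar> \<le> B * \<bar>y - x\<bar>"
proof -
  have main: "\<bar>f b - f a\<bar> \<le> B * \<bar>b - a\<bar>" if "a < b" for a b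
  proof -
    have "\<exists>z. a < z \<and> z < b \<and> f b - f a = (b - a) * f' z"
      by (rule MVT2[OF that]) (rule der)
    then obtain z where z: "f b - f a = (b - a) * f' z" by blast
    have "\<bar>f b - f a\<bar> = \<bar>b - a\<bar> * \<bar>f' z\<bar>" by (simp add: z abs_mult)
    also have "\<dots> \<le> \<bar>b - a\<bar> * B" by (intro mult_left_mono bnd) auto
    finally show ?thesis by (simp add: mult.commute)
  qed
  consider "x < y" | "x = y" | "y < x" by linarith
  then show ?thesis
  proof cases
    case 3 then show ?thesis using main[OF 3] by (simp add: abs_minus_commute)
  qed (use main in auto)
qed

lemma DERIV_integral:
  fixes f f' :: "real \<Rightarrow> real \<Rightarrow> real" and B :: "real \<Rightarrow> real"
  assumes int: "\<And>x. integrable M (f x)"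
    and der: "\<And>x w. ((\<lambda>x. f x w) has_real_derivative f' x w) (at x)"
    and bnd: "\<And>x w. \<bar>f' x w\<bar> \<le> B w" and intB: "integrable M B"
    and meas: "\<And>x. f' x \<in> borel_measurable M"
  shows "((\<lambda>x. integral\<^sup>L M (f x)) has_real_derivative integral\<^sup>L M (f' x0)) (at x0)"
proof -
  have "((\<lambda>y. (integral\<^sup>L M (f y) - integral\<^sup>L M (f x0)) / (y - x0)) \<longlongrightarrow> integral\<^sup>L M (f' x0)) (at x0)"
    unfolding tendsto_at_iff_sequentially
  proof (intro allI impI)
    fix X :: "nat \<Rightarrow> real" assume X: "\<forall>i. X i \<in> UNIV - {x0}" "X \<longlonglongrightarrow> x0"
    define s where "s i w = (f (X i) w - f x0 w) / (X i - x0)" for i w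
    have lim: "AE w in M. (\<lambda>i. s i w) \<longlonglongrightarrow> f' x0 w"
    proof (intro AE_I2)
      fix w
      have "((\<lambda>x. f x w) has_real_derivative f' x0 w) (at x0)" by (rule der)
      then have "((\<lambda>y. (f y w - f x0 w) / (y - x0)) \<longlongrightarrow> f' x0 w) (at x0)"
        by (simp add: has_field_derivative_iff)
      then show "(\<lambda>i. s i w) \<longlonglongrightarrow> f' x0 w"
        unfolding tendsto_at_iff_sequentially using X by (auto simp: s_def comp_def)
    qed
    have bound: "AE w in M. norm (s i w) \<le> B w" for i
    proof (intro AE_I2)
      fix w
      have "\<bar>f (X i) w - f x0 w\<bar> \<le> B w * \<bar>X i - x0\<bar>"
        by (rule lipschitz_from_deriv[where f="\<lambda>x. f x w"]) (rule der, rule bnd)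
      moreover have "\<bar>X i - x0\<bar> > 0" using X by auto
      ultimately show "norm (s i w) \<le> B w"
        by (simp add: s_def abs_divide divide_le_eq)
    qed
    have sm: "s i \<in> borel_measurable M" for i
      unfolding s_def using int[of "X i"] int[of x0] by measurable
    have "(\<lambda>i. integral\<^sup>L M (s i)) \<longlonglongrightarrow> integral\<^sup>L M (f' x0)"
      by (rule integral_dominated_convergence[OF meas sm intB lim bound])
    moreover have "integral\<^sup>L M (s i) = (integral\<^sup>L M (f (X i)) - integral\<^sup>L M (f x0)) / (X i - x0)" for i
      unfolding s_def using int[of "X i"] int[of x0] by simp
    ultimately show "((\<lambda>y. (integral\<^sup>L M (f y) - integral\<^sup>L M (f x0)) / (y - x0)) \<circ> X) \<longlonglongrightarrow> integral\<^sup>L M (f' x0)"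
      by (simp add: comp_def)
  qed
  then show ?thesis by (simp add: has_field_derivative_iff)
qed


lemma x2l_cont[continuous_intros]: "continuous_on S f \<Longrightarrow> continuous_on S (\<lambda>x. x2l (f x))"
  unfolding x2l_def by (intro continuous_intros)

lemma PP_cont_s: "continuous_on UNIV (\<lambda>s. PP x s)"
  unfolding PP_alt by (auto intro!: continuous_intros)

lemma Dx_cont_s: "continuous_on UNIV (\<lambda>s. Dx x s)"
  unfolding Dx_def by (intro continuous_intros)

lemma PP_bound: assumes "0 \<le> s" shows "\<bar>PP x s\<bar> \<le> 4 * s\<^sup>2 * \<bar>x\<bar>"
  using lipschitz_from_deriv[where f="\<lambda>x. PP x s" and f'="\<lambda>x. Dx x s" and B="4 * s\<^sup>2" and y=x and x=0]
    PP_deriv Dx_bound[OF assms] by (simp add: PP_zero)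

lemma DD_cvxg: assumes "\<omega> \<in> DD a" shows "cvxg (\<lambda>u. \<omega> (sqrt u))"
proof -
  have conv: "convex_on {0..} (\<lambda>s. \<omega> (sqrt s))"
    and mono: "\<And>x y. 0 \<le> x \<Longrightarrow> x \<le> y \<Longrightarrow> \<omega> y \<le> \<omega> x"
    and w0: "\<omega> 0 = 1"
    and bnd: "\<And>x. max 0 (1 - x\<^sup>2) \<le> \<omega> x"
    using assms unfolding DD_def by auto
  show ?thesis unfolding cvxg_def
  proof (intro conjI allI impI)
    show "convex_on {0..} (\<lambda>u. \<omega> (sqrt u))" by (rule conv)
    fix u v :: real assume "0 \<le> u" "u \<le> v"
    then show "\<omega> (sqrt v) \<le> \<omega> (sqrt u)" by (intro mono) auto
  next
    show "\<omega> (sqrt 0) = 1" using w0 by simp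
  next
    fix u :: real assume u: "0 \<le> u"
    have "max 0 (1 - (sqrt u)\<^sup>2) \<le> \<omega> (sqrt u)" by (rule bnd)
    then show "1 - u \<le> \<omega> (sqrt u)" "0 \<le> \<omega> (sqrt u)" using u by auto
  qed
qed

lemma omega_rep:
  assumes "\<omega> \<in> DD a" "0 < y"
  shows "\<omega> y = (LBINT \<tau>:{0<..<1}. 1 - min (y\<^sup>2) (tt (\<lambda>u. \<omega> (sqrt u)) \<tau>))"
  using g_rep[OF DD_cvxg[OF assms(1)], of "y\<^sup>2"] assms(2) by simp

lemma T_rep:
  assumes w: "\<omega> \<in> DD a"
  defines "t \<equiv> tt (\<lambda>u. \<omega> (sqrt u))"
  shows "T \<omega> x = 1 / pi * (\<integral>\<tau>. indicator {0<..<1} \<tau> * PP x (sqrt (t \<tau>)) \<partial>lborel)"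
proof -
  have g: "cvxg (\<lambda>u. \<omega> (sqrt u))" by (rule DD_cvxg[OF w])
  have tm[measurable]: "t \<in> borel_measurable borel" unfolding t_def by (rule tt_meas[OF g])
  have tnn: "0 \<le> t \<tau>" for \<tau> unfolding t_def by (rule tt_nonneg[OF g])
  have tint: "integrable lborel (\<lambda>\<tau>. indicator {0<..<1} \<tau> * t \<tau>)"
    using tt_int[OF g] unfolding t_def set_integrable_def by simp
  define f2 where "f2 \<tau> y = (indicator {0<..} y * Kf x y) * (indicator {0<..<1} \<tau> * (1 - min (y\<^sup>2) (t \<tau>)))" for \<tau> y
  have f2m: "case_prod f2 \<in> borel_measurable (lborel \<Otimes>\<^sub>M lborel)"
    unfolding f2_def by measurable
  have f2alt: "f2 \<tau> y = indicator {0<..<1} \<tau> * (indicator {0<..} y * (Kf x y * (1 - min (y\<^sup>2) (t \<tau>))))" for \<tau> y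
    by (simp add: f2_def algebra_simps)
  have kw: "set_integrable lborel {0<..} (\<lambda>y. Kf x y * (1 - min (y\<^sup>2) (t \<tau>)))
    \<and> (LBINT y:{0<..}. Kf x y * (1 - min (y\<^sup>2) (t \<tau>))) = PP x (sqrt (t \<tau>))" for \<tau>
    using Kf_weight_integral[of "sqrt (t \<tau>)" x] tnn[of \<tau>] by simp
  have inner_int: "integrable lborel (\<lambda>y. f2 \<tau> y)" for \<tau>
    using kw[of \<tau>] unfolding f2alt set_integrable_def by simp
  have inner_val: "(\<integral>y. f2 \<tau> y \<partial>lborel) = indicator {0<..<1} \<tau> * PP x (sqrt (t \<tau>))" for \<tau>
    using kw[of \<tau>] unfolding f2alt set_lebesgue_integral_def by simp
  obtain C where C: "C = (\<integral>y. indicator {0<..} y * \<bar>Kf x y\<bar> \<partial>lborel)" by blast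
  have iK: "integrable lborel (\<lambda>y. indicator {0<..} y * \<bar>Kf x y\<bar>)"
  proof -
    have "integrable lborel (\<lambda>y. norm (indicator {0<..} y * Kf x y))"
      using Kf_integral[of x] unfolding set_integrable_def by (intro integrable_norm) simp
    then show ?thesis by (simp add: abs_mult)
  qed
  have normint: "integrable lborel (\<lambda>\<tau>. \<integral>y. norm (f2 \<tau> y) \<partial>lborel)"
  proof (rule Bochner_Integration.integrable_bound)
    show "integrable lborel (\<lambda>\<tau>. (indicator {0<..<1} \<tau> + indicator {0<..<1} \<tau> * t \<tau>) * C)"
      using tint ind_Ioo_int[of 0 1] by (intro integrable_mult_left integrable_add) auto
    show "(\<lambda>\<tau>. \<integral>y. norm (f2 \<tau> y) \<partial>lborel) \<in> borel_measurable lborel"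
      using f2m by measurable
    show "AE \<tau> in lborel. norm (\<integral>y. norm (f2 \<tau> y) \<partial>lborel) \<le> norm ((indicator {0<..<1} \<tau> + indicator {0<..<1} \<tau> * t \<tau>) * C)"
    proof (rule AE_I2)
      fix \<tau>
      have "(\<integral>y. norm (f2 \<tau> y) \<partial>lborel) \<le> (\<integral>y. (indicator {0<..<1} \<tau> + indicator {0<..<1} \<tau> * t \<tau>) * (indicator {0<..} y * \<bar>Kf x y\<bar>) \<partial>lborel)"
      proof (rule integral_mono)
        show "integrable lborel (\<lambda>y. norm (f2 \<tau> y))" using inner_int by (intro integrable_norm)
        show "integrable lborel (\<lambda>y. (indicator {0<..<1} \<tau> + indicator {0<..<1} \<tau> * t \<tau>) * (indicator {0<..} y * \<bar>Kf x y\<bar>))"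
          using iK by (intro integrable_mult_right)
        fix y
        have "0 \<le> min (y\<^sup>2) (t \<tau>)" "min (y\<^sup>2) (t \<tau>) \<le> t \<tau>" using tnn[of \<tau>] by auto
        then have m: "\<bar>1 - min (y\<^sup>2) (t \<tau>)\<bar> \<le> 1 + t \<tau>" by linarith
        have "norm (f2 \<tau> y) = (indicator {0<..} y * \<bar>Kf x y\<bar>) * (indicator {0<..<1} \<tau> * \<bar>1 - min (y\<^sup>2) (t \<tau>)\<bar>)"
          by (simp add: f2_def abs_mult)
        also have "\<dots> \<le> (indicator {0<..} y * \<bar>Kf x y\<bar>) * (indicator {0<..<1} \<tau> * (1 + t \<tau>))"
          using m by (intro mult_left_mono) (auto simp: indicator_def)
        finally show "norm (f2 \<tau> y) \<le> (indicator {0<..<1} \<tau> + indicator {0<..<1} \<tau> * t \<tau>) * (indicator {0<..} y * \<bar>Kf x y\<bar>)"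
          by (simp add: algebra_simps)
      qed
      also have "\<dots> = (indicator {0<..<1} \<tau> + indicator {0<..<1} \<tau> * t \<tau>) * C" by (simp add: C)
      finally show "norm (\<integral>y. norm (f2 \<tau> y) \<partial>lborel) \<le> norm ((indicator {0<..<1} \<tau> + indicator {0<..<1} \<tau> * t \<tau>) * C)"
        by simp
    qed
  qed
  have fint: "integrable (lborel \<Otimes>\<^sub>M lborel) (case_prod f2)"
    by (rule lborel_pair.Fubini_integrable[OF f2m]) (use normint inner_int in auto)
  have fub: "(\<integral>y. (\<integral>\<tau>. f2 \<tau> y \<partial>lborel) \<partial>lborel) = (\<integral>\<tau>. (\<integral>y. f2 \<tau> y \<partial>lborel) \<partial>lborel)"
    by (rule lborel_pair.Fubini_integral[OF fint])
  have lhs: "(\<integral>\<tau>. f2 \<tau> y \<partial>lborel) = indicator {0<..} y * (ln \<bar>(x\<^sup>2 - y\<^sup>2) / y\<^sup>2\<bar> * \<omega> y)" for y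
  proof (cases "0 < y")
    case True
    have "(\<integral>\<tau>. f2 \<tau> y \<partial>lborel) = (indicator {0<..} y * Kf x y) * (LBINT \<tau>:{0<..<1}. 1 - min (y\<^sup>2) (t \<tau>))"
      unfolding f2_def set_lebesgue_integral_def by simp
    also have "\<dots> = (indicator {0<..} y * Kf x y) * \<omega> y"
      using omega_rep[OF w True] by (simp add: t_def)
    finally show ?thesis by (simp add: Kf_def)
  next
    case False
    then show ?thesis by (simp add: f2_def)
  qed
  have "T \<omega> x = 1 / pi * (\<integral>y. (\<integral>\<tau>. f2 \<tau> y \<partial>lborel) \<partial>lborel)"
    unfolding T_def lhs set_lebesgue_integral_def by simp
  also have "\<dots> = 1 / pi * (\<integral>\<tau>. indicator {0<..<1} \<tau> * PP x (sqrt (t \<tau>)) \<partial>lborel)"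
    unfolding fub inner_val ..
  finally show ?thesis .
qed

theorem mainTheorem9:
  fixes a :: real and \<omega> :: "real \<Rightarrow> real"
  assumes "a < 1" and "\<omega> \<in> DD a"
  shows "T \<omega> 0 = 0
    \<and> (\<forall>x\<ge>0. \<exists>D. (T \<omega> has_real_derivative D) (at x) \<and> D \<ge> 0)
    \<and> concave_on {0..} (\<lambda>s. T \<omega> (sqrt s))"
proof -
  note w = assms(2)
  define t where "t = tt (\<lambda>u. \<omega> (sqrt u))"
  have g: "cvxg (\<lambda>u. \<omega> (sqrt u))" by (rule DD_cvxg[OF w])
  have tm[measurable]: "t \<in> borel_measurable borel" unfolding t_def by (rule tt_meas[OF g])
  have tnn: "0 \<le> t \<tau>" for \<tau> unfolding t_def by (rule tt_nonneg[OF g])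
  have tint: "integrable lborel (\<lambda>\<tau>. indicator {0<..<1} \<tau> * t \<tau>)"
    using tt_int[OF g] unfolding t_def set_integrable_def by simp
  define f where "f x \<tau> = indicator {0<..<1} \<tau> * PP x (sqrt (t \<tau>))" for x \<tau>
  define f' where "f' x \<tau> = indicator {0<..<1} \<tau> * Dx x (sqrt (t \<tau>))" for x \<tau>
  define B where "B \<tau> = indicator {0<..<1} \<tau> * (4 * t \<tau>)" for \<tau>
  have fe: "f x = (\<lambda>\<tau>. indicator {0<..<1} \<tau> * PP x (sqrt (t \<tau>)))" for x
    by (simp add: f_def fun_eq_iff)
  have Trep: "T \<omega> = (\<lambda>x. 1 / pi * integral\<^sup>L lborel (f x))"
    unfolding fe t_def using T_rep[OF w] by (simp add: fun_eq_iff)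
  have pm[measurable]: "(\<lambda>\<tau>. PP x (sqrt (t \<tau>))) \<in> borel_measurable borel" for x
    by (rule borel_measurable_continuous_on[OF PP_cont_s]) measurable
  have dm[measurable]: "(\<lambda>\<tau>. Dx x (sqrt (t \<tau>))) \<in> borel_measurable borel" for x
    by (rule borel_measurable_continuous_on[OF Dx_cont_s]) measurable
  have intB: "integrable lborel B" unfolding B_def using tint by (simp add: mult.left_commute[of _ 4])
  have fint: "integrable lborel (f x)" for x
  proof (rule Bochner_Integration.integrable_bound)
    show "integrable lborel (\<lambda>\<tau>. \<bar>x\<bar> * B \<tau>)" using intB by simp
    show "f x \<in> borel_measurable lborel" unfolding f_def by measurable
    show "AE \<tau> in lborel. norm (f x \<tau>) \<le> norm (\<bar>x\<bar> * B \<tau>)"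
    proof (rule AE_I2)
      fix \<tau>
      have "\<bar>PP x (sqrt (t \<tau>))\<bar> \<le> 4 * (sqrt (t \<tau>))\<^sup>2 * \<bar>x\<bar>" by (rule PP_bound) (simp add: tnn)
      then have "\<bar>PP x (sqrt (t \<tau>))\<bar> \<le> \<bar>x\<bar> * (4 * t \<tau>)" using tnn[of \<tau>] by (simp add: mult.commute)
      moreover have "0 \<le> \<bar>x\<bar> * (4 * t \<tau>)" using tnn[of \<tau>] by simp
      ultimately show "norm (f x \<tau>) \<le> norm (\<bar>x\<bar> * B \<tau>)"
        using tnn[of \<tau>] by (auto simp: f_def B_def indicator_def abs_mult)
    qed
  qed
  have der: "((\<lambda>x. f x \<tau>) has_real_derivative f' x \<tau>) (at x)" for x \<tau>
    unfolding f_def f'_def by (intro DERIV_cmult PP_deriv)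
  have bnd: "\<bar>f' x \<tau>\<bar> \<le> B \<tau>" for x \<tau>
  proof -
    have "\<bar>Dx x (sqrt (t \<tau>))\<bar> \<le> 4 * (sqrt (t \<tau>))\<^sup>2" by (rule Dx_bound) (simp add: tnn)
    then have "\<bar>Dx x (sqrt (t \<tau>))\<bar> \<le> 4 * t \<tau>" using tnn[of \<tau>] by simp
    then show ?thesis by (auto simp: f'_def B_def indicator_def)
  qed
  have f'm: "f' x \<in> borel_measurable lborel" for x unfolding f'_def by measurable
  have T0: "T \<omega> 0 = 0"
  proof -
    have "f 0 = (\<lambda>\<tau>. 0)" by (simp add: f_def PP_zero fun_eq_iff)
    then show ?thesis unfolding Trep by simp
  qed
  have Tder: "\<exists>D. (T \<omega> has_real_derivative D) (at x) \<and> D \<ge> 0" if x: "x \<ge> 0" for x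
  proof (intro exI conjI)
    have "((\<lambda>x. integral\<^sup>L lborel (f x)) has_real_derivative integral\<^sup>L lborel (f' x)) (at x)"
      by (rule DERIV_integral[OF fint der bnd intB f'm])
    then show "(T \<omega> has_real_derivative 1 / pi * integral\<^sup>L lborel (f' x)) (at x)"
      unfolding Trep by (rule DERIV_cmult)
    have "0 \<le> f' x \<tau>" for \<tau>
      using Dx_nonneg_le[OF x, of "sqrt (t \<tau>)"] tnn[of \<tau>] by (simp add: f'_def)
    then have "0 \<le> integral\<^sup>L lborel (f' x)" using Bochner_Integration.integral_nonneg[where M=lborel and f="f' x"] by blast
    then show "0 \<le> 1 / pi * integral\<^sup>L lborel (f' x)" by simp
  qed
  have Tconc: "concave_on {0..} (\<lambda>s. T \<omega> (sqrt s))"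
  proof (rule concave_on_linorderI)
    show "convex {0::real..}" by (simp add: convex_real_interval)
    fix c u v :: real assume c: "0 < c" "c < 1" and uv: "u \<in> {0..}" "v \<in> {0..}" "u < v"
    define z where "z = (1 - c) *\<^sub>R u + c *\<^sub>R v"
    have pw: "(1 - c) * f (sqrt u) \<tau> + c * f (sqrt v) \<tau> \<le> f (sqrt z) \<tau>" for \<tau>
    proof -
      have "(1 - c) * PP (sqrt u) (sqrt (t \<tau>)) + c * PP (sqrt v) (sqrt (t \<tau>)) \<le> PP (sqrt z) (sqrt (t \<tau>))"
        using concave_onD[OF PP_sqrt_concave[of "sqrt (t \<tau>)"], of c u v] c uv tnn[of \<tau>] by (simp add: z_def)
      then show ?thesis by (auto simp: f_def indicator_def)
    qed
    have "(1 - c) * integral\<^sup>L lborel (f (sqrt u)) + c * integral\<^sup>L lborel (f (sqrt v))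
        = integral\<^sup>L lborel (\<lambda>\<tau>. (1 - c) * f (sqrt u) \<tau> + c * f (sqrt v) \<tau>)"
      using fint by simp
    also have "\<dots> \<le> integral\<^sup>L lborel (f (sqrt z))"
      by (rule integral_mono) (use fint pw in auto)
    finally have "(1 - c) * integral\<^sup>L lborel (f (sqrt u)) + c * integral\<^sup>L lborel (f (sqrt v))
        \<le> integral\<^sup>L lborel (f (sqrt z))" .
    then have ineq: "1 / pi * ((1 - c) * integral\<^sup>L lborel (f (sqrt u)) + c * integral\<^sup>L lborel (f (sqrt v)))
        \<le> 1 / pi * integral\<^sup>L lborel (f (sqrt z))"
      by (intro mult_left_mono) auto
    have eqc: "(1 - c) * (1 / pi * A) + c * (1 / pi * B) = 1 / pi * ((1 - c) * A + c * B)" for A B :: real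
      by (simp add: field_simps)
    show "(1 - c) * T \<omega> (sqrt u) + c * T \<omega> (sqrt v) \<le> T \<omega> (sqrt ((1 - c) *\<^sub>R u + c *\<^sub>R v))"
      unfolding Trep z_def[symmetric] eqc by (rule ineq)
  qed
  show ?thesis using T0 Tder Tconc by blast
qed


end
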